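(* In the calculus $\mathsf{CL}$: (1) the rule Mon$\forall$ (from $b\subseteq a,b\Vdash^\forall A,a\Vdash^\forall A,\Gamma\Rightarrow\Delta$ infer $b\subseteq a,a\Vdash^\forall A,\Gamma\Rightarrow\Delta$) is admissible; (2) the rule L$>$ and the rule L$>^\star$ (from $a\in N(x),x:A>B,\Gamma\Rightarrow\Delta,a\Vdash^\exists A$ and $a\Vdash^\exists A,x\Vdash_aA|B,a\in N(x),x:A>B,\Gamma\Rightarrow\Delta$ infer $a\in N(x),x:A>B,\Gamma\Rightarrow\Delta$) are equivalent, i.e. each is admissible in the calculus containing the other instead.
   Context: Syntax: world labels $x,y,\dots$; neighbourhood labels $a,b,\dots$. Relational atoms $a\in N(x)$, $x\in a$, $a\subseteq b$; labelled formulas: these, $x:A$, $a\Vdash^\exists A$, $a\Vdash^\forall A$, $x\Vdash_aA|B$, for $A,B\in\mathcal{L}::=p\mid\bot\mid A\wedge B\mid A\lor B\mid A\to B\mid A>B$. Sequents $\Gamma\Rightarrow\Delta$: multisets, relational atoms only on the left. Rules of $\mathsf{CL}$ (premisses / conclusion; "fresh" = not occurring in conclusion): initial sequents $x:p,\Gamma\Rightarrow\Delta,x:p$ ($p$ atomic), $x:\bot,\Gamma\Rightarrow\Delta$; G3 rules for $\wedge,\vee,\to$ on $x:A$; L$\forall$: $x:A,x\in a,a\Vdash^\forall A,\Gamma\Rightarrow\Delta$ / $x\in a,a\Vdash^\forall A,\Gamma\Rightarrow\Delta$; R$\forall$ (x fresh): $x\in a,\Gamma\Rightarrow\Delta,x:A$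 / $\Gamma\Rightarrow\Delta,a\Vdash^\forall A$; L$\exists$ (x fresh): $x\in a,x:A,\Gamma\Rightarrow\Delta$ / $a\Vdash^\exists A,\Gamma\Rightarrow\Delta$; R$\exists$: $x\in a,\Gamma\Rightarrow\Delta,x:A,a\Vdash^\exists A$ / $x\in a,\Gamma\Rightarrow\Delta,a\Vdash^\exists A$; R$>$ (a fresh): $a\in N(x),a\Vdash^\exists A,\Gamma\Rightarrow\Delta,x\Vdash_aA|B$ / $\Gamma\Rightarrow\Delta,x:A>B$; L$>$: $a\in N(x),x:A>B,\Gamma\Rightarrow\Delta,a\Vdash^\exists A$ and $x\Vdash_aA|B,a\in N(x),x:A>B,\Gamma\Rightarrow\Delta$ / $a\in N(x),x:A>B,\Gamma\Rightarrow\Delta$; R$|$: $c\in N(x),c\subseteq a,\Gamma\Rightarrow\Delta,x\Vdash_aA|B,c\Vdash^\exists A$ and $c\in N(x),c\subseteq a,\Gamma\Rightarrow\Delta,x\Vdash_aA|B,c\Vdash^\forall A\to B$ / $c\in N(x),c\subseteq a,\Gamma\Rightarrow\Delta,x\Vdash_aA|B$; L$|$ (c fresh): $c\in N(x),c\subseteq a,c\Vdash^\exists A,c\Vdash^\forall A\to B,\Gamma\Rightarrow\Delta$ / $x\Vdash_aA|B,\Gamma\Rightarrow\Delta$; Ref: $a\subseteq a,\Gamma\Rightarrow\Delta$ / $\Gamma\Rightarrow\Delta$; Tr: $c\subseteq a,c\subseteq b,b\subseteq a,\Gamma\Rightarrow\Delta$ / $c\subseteq b,b\subseteq a,\Gamma\Rightarrow\Delta$;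 L$\subseteq$: $x\in a,a\subseteq b,x\in b,\Gamma\Rightarrow\Delta$ / $x\in a,a\subseteq b,\Gamma\Rightarrow\Delta$. *)

theory Defs
  imports Main "HOL-Library.Multiset"
begin

text \<open>Formulas of the language L over atoms of type 'p; Cond A B is A > B.\<close>
datatype 'p fm = At 'p | Bot | Conj "'p fm" "'p fm" | Disj "'p fm" "'p fm"
  | Impl "'p fm" "'p fm" | Cond "'p fm" "'p fm"

text \<open>World labels and neighbourhood labels are both natural numbers; their sort is
determined by the argument position of the constructor.
  RN a x       :  a \<in> N(x)
  RW x a       :  x \<in> a
  RS a b       :  a \<subseteq> b
  Lab x A      :  x : A
  FEx a A      :  a forces-exists A
  FAll a A     :  a forces-forall A
  FCnd x a A B :  x forces_a A|B\<close>
type_synonym wlab = nat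
type_synonym nlab = nat

datatype 'p lf = RN nlab wlab | RW wlab nlab | RS nlab nlab
  | Lab wlab "'p fm" | FEx nlab "'p fm" | FAll nlab "'p fm"
  | FCnd wlab nlab "'p fm" "'p fm"

fun is_rel :: "'p lf \<Rightarrow> bool" where
  "is_rel (RN a x) = True"
| "is_rel (RW x a) = True"
| "is_rel (RS a b) = True"
| "is_rel _ = False"

fun wlabs :: "'p lf \<Rightarrow> wlab set" where
  "wlabs (RN a x) = {x}"
| "wlabs (RW x a) = {x}"
| "wlabs (RS a b) = {}"
| "wlabs (Lab x A) = {x}"
| "wlabs (FEx a A) = {}"
| "wlabs (FAll a A) = {}"
| "wlabs (FCnd x a A B) = {x}"

fun nlabs :: "'p lf \<Rightarrow> nlab set" where
  "nlabs (RN a x) = {a}"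
| "nlabs (RW x a) = {a}"
| "nlabs (RS a b) = {a, b}"
| "nlabs (Lab x A) = {}"
| "nlabs (FEx a A) = {a}"
| "nlabs (FAll a A) = {a}"
| "nlabs (FCnd x a A B) = {a}"

definition wl_seq :: "'p lf multiset \<Rightarrow> 'p lf multiset \<Rightarrow> wlab set" where
  "wl_seq G D = (\<Union>\<phi>\<in>set_mset (G + D). wlabs \<phi>)"

definition nl_seq :: "'p lf multiset \<Rightarrow> 'p lf multiset \<Rightarrow> nlab set" where
  "nl_seq G D = (\<Union>\<phi>\<in>set_mset (G + D). nlabs \<phi>)"

text \<open>Which version of the left rule for > the calculus contains:
  CL uses L>, CLstar is CL with L> replaced by L>*.\<close>
datatype calc = CL | CLstar

text \<open>Relational atoms may only occur on the
left: the initial sequents require D to contain no relational atom, and no rule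
introduces a relational atom on the right.\<close>
inductive deriv :: "calc \<Rightarrow> 'p lf multiset \<Rightarrow> 'p lf multiset \<Rightarrow> bool" for K :: calc where
  init: "\<forall>\<phi>\<in>#D. \<not> is_rel \<phi> \<Longrightarrow>
     deriv K (add_mset (Lab x (At p)) G) (add_mset (Lab x (At p)) D)"
| botL: "\<forall>\<phi>\<in>#D. \<not> is_rel \<phi> \<Longrightarrow> deriv K (add_mset (Lab x Bot) G) D"
| conjL: "deriv K (add_mset (Lab x A) (add_mset (Lab x B) G)) D \<Longrightarrow>
     deriv K (add_mset (Lab x (Conj A B)) G) D"
| conjR: "deriv K G (add_mset (Lab x A) D) \<Longrightarrow> deriv K G (add_mset (Lab x B) D) \<Longrightarrow>
     deriv K G (add_mset (Lab x (Conj A B)) D)"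
| disjL: "deriv K (add_mset (Lab x A) G) D \<Longrightarrow> deriv K (add_mset (Lab x B) G) D \<Longrightarrow>
     deriv K (add_mset (Lab x (Disj A B)) G) D"
| disjR: "deriv K G (add_mset (Lab x A) (add_mset (Lab x B) D)) \<Longrightarrow>
     deriv K G (add_mset (Lab x (Disj A B)) D)"
| implL: "deriv K G (add_mset (Lab x A) D) \<Longrightarrow> deriv K (add_mset (Lab x B) G) D \<Longrightarrow>
     deriv K (add_mset (Lab x (Impl A B)) G) D"
| implR: "deriv K (add_mset (Lab x A) G) (add_mset (Lab x B) D) \<Longrightarrow>
     deriv K G (add_mset (Lab x (Impl A B)) D)"
| allL: "deriv K (add_mset (Lab x A) (add_mset (RW x a) (add_mset (FAll a A) G))) D \<Longrightarrow>
     deriv K (add_mset (RW x a) (add_mset (FAll a A) G)) D"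
| allR: "x \<notin> wl_seq G (add_mset (FAll a A) D) \<Longrightarrow>
     deriv K (add_mset (RW x a) G) (add_mset (Lab x A) D) \<Longrightarrow>
     deriv K G (add_mset (FAll a A) D)"
| exL: "x \<notin> wl_seq (add_mset (FEx a A) G) D \<Longrightarrow>
     deriv K (add_mset (RW x a) (add_mset (Lab x A) G)) D \<Longrightarrow>
     deriv K (add_mset (FEx a A) G) D"
| exR: "deriv K (add_mset (RW x a) G) (add_mset (Lab x A) (add_mset (FEx a A) D)) \<Longrightarrow>
     deriv K (add_mset (RW x a) G) (add_mset (FEx a A) D)"
| condR: "a \<notin> nl_seq G (add_mset (Lab x (Cond A B)) D) \<Longrightarrow>
     deriv K (add_mset (RN a x) (add_mset (FEx a A) G)) (add_mset (FCnd x a A B) D) \<Longrightarrow>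
     deriv K G (add_mset (Lab x (Cond A B)) D)"
| condL: "K = CL \<Longrightarrow>
     deriv K (add_mset (RN a x) (add_mset (Lab x (Cond A B)) G)) (add_mset (FEx a A) D) \<Longrightarrow>
     deriv K (add_mset (FCnd x a A B) (add_mset (RN a x) (add_mset (Lab x (Cond A B)) G))) D \<Longrightarrow>
     deriv K (add_mset (RN a x) (add_mset (Lab x (Cond A B)) G)) D"
| condLstar: "K = CLstar \<Longrightarrow>
     deriv K (add_mset (RN a x) (add_mset (Lab x (Cond A B)) G)) (add_mset (FEx a A) D) \<Longrightarrow>
     deriv K (add_mset (FEx a A) (add_mset (FCnd x a A B)
        (add_mset (RN a x) (add_mset (Lab x (Cond A B)) G)))) D \<Longrightarrow>
     deriv K (add_mset (RN a x) (add_mset (Lab x (Cond A B)) G)) D"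
| cndR: "deriv K (add_mset (RN c x) (add_mset (RS c a) G))
         (add_mset (FCnd x a A B) (add_mset (FEx c A) D)) \<Longrightarrow>
     deriv K (add_mset (RN c x) (add_mset (RS c a) G))
         (add_mset (FCnd x a A B) (add_mset (FAll c (Impl A B)) D)) \<Longrightarrow>
     deriv K (add_mset (RN c x) (add_mset (RS c a) G)) (add_mset (FCnd x a A B) D)"
| cndL: "c \<notin> nl_seq (add_mset (FCnd x a A B) G) D \<Longrightarrow>
     deriv K (add_mset (RN c x) (add_mset (RS c a) (add_mset (FEx c A)
        (add_mset (FAll c (Impl A B)) G)))) D \<Longrightarrow>
     deriv K (add_mset (FCnd x a A B) G) D"
| refl: "deriv K (add_mset (RS a a) G) D \<Longrightarrow> deriv K G D"
| trans: "deriv K (add_mset (RS c a) (add_mset (RS c b) (add_mset (RS b a) G))) D \<Longrightarrow>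
     deriv K (add_mset (RS c b) (add_mset (RS b a) G)) D"
| subL: "deriv K (add_mset (RW x a) (add_mset (RS a b) (add_mset (RW x b) G))) D \<Longrightarrow>
     deriv K (add_mset (RW x a) (add_mset (RS a b) G)) D"

end

theory Submission
  imports Defs
begin


inductive dh :: "calc \<Rightarrow> 'p lf multiset \<Rightarrow> 'p lf multiset \<Rightarrow> bool" for K :: calc where
  hinit: "Lab x (At p) \<in># G \<Longrightarrow> Lab x (At p) \<in># D \<Longrightarrow> \<forall>\<phi>\<in>#D. \<not> is_rel \<phi> \<Longrightarrow> dh K G D"
| hbotL: "Lab x Bot \<in># G \<Longrightarrow> \<forall>\<phi>\<in>#D. \<not> is_rel \<phi> \<Longrightarrow> dh K G D"
| hconjL: "dh K (add_mset (Lab x A) (add_mset (Lab x B) G)) D \<Longrightarrow>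
     dh K (add_mset (Lab x (Conj A B)) G) D"
| hconjR: "dh K G (add_mset (Lab x A) D) \<Longrightarrow> dh K G (add_mset (Lab x B) D) \<Longrightarrow>
     dh K G (add_mset (Lab x (Conj A B)) D)"
| hdisjL: "dh K (add_mset (Lab x A) G) D \<Longrightarrow> dh K (add_mset (Lab x B) G) D \<Longrightarrow>
     dh K (add_mset (Lab x (Disj A B)) G) D"
| hdisjR: "dh K G (add_mset (Lab x A) (add_mset (Lab x B) D)) \<Longrightarrow>
     dh K G (add_mset (Lab x (Disj A B)) D)"
| himplL: "dh K G (add_mset (Lab x A) D) \<Longrightarrow> dh K (add_mset (Lab x B) G) D \<Longrightarrow>
     dh K (add_mset (Lab x (Impl A B)) G) D"
| himplR: "dh K (add_mset (Lab x A) G) (add_mset (Lab x B) D) \<Longrightarrow>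
     dh K G (add_mset (Lab x (Impl A B)) D)"
| hallL: "RW x a \<in># G \<Longrightarrow> FAll a A \<in># G \<Longrightarrow> dh K (add_mset (Lab x A) G) D \<Longrightarrow> dh K G D"
| hallR: "finite S \<Longrightarrow> (\<And>y. y \<notin> S \<Longrightarrow> dh K (add_mset (RW y a) G) (add_mset (Lab y A) D)) \<Longrightarrow>
     dh K G (add_mset (FAll a A) D)"
| hexL: "finite S \<Longrightarrow> (\<And>y. y \<notin> S \<Longrightarrow> dh K (add_mset (RW y a) (add_mset (Lab y A) G)) D) \<Longrightarrow>
     dh K (add_mset (FEx a A) G) D"
| hexR: "RW x a \<in># G \<Longrightarrow> FEx a A \<in># D \<Longrightarrow> dh K G (add_mset (Lab x A) D) \<Longrightarrow> dh K G D"
| hcondR: "finite S \<Longrightarrow> (\<And>b. b \<notin> S \<Longrightarrow>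
       dh K (add_mset (RN b x) (add_mset (FEx b A) G)) (add_mset (FCnd x b A B) D)) \<Longrightarrow>
     dh K G (add_mset (Lab x (Cond A B)) D)"
| hcondL: "K = CL \<Longrightarrow> RN a x \<in># G \<Longrightarrow> Lab x (Cond A B) \<in># G \<Longrightarrow>
     dh K G (add_mset (FEx a A) D) \<Longrightarrow> dh K (add_mset (FCnd x a A B) G) D \<Longrightarrow> dh K G D"
| hcondLs: "K = CLstar \<Longrightarrow> RN a x \<in># G \<Longrightarrow> Lab x (Cond A B) \<in># G \<Longrightarrow>
     dh K G (add_mset (FEx a A) D) \<Longrightarrow> dh K (add_mset (FEx a A) (add_mset (FCnd x a A B) G)) D \<Longrightarrow>
     dh K G D"
| hcndR: "RN c x \<in># G \<Longrightarrow> RS c a \<in># G \<Longrightarrow> FCnd x a A B \<in># D \<Longrightarrow>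
     dh K G (add_mset (FEx c A) D) \<Longrightarrow> dh K G (add_mset (FAll c (Impl A B)) D) \<Longrightarrow> dh K G D"
| hcndL: "finite S \<Longrightarrow> (\<And>c. c \<notin> S \<Longrightarrow>
     dh K (add_mset (RN c x) (add_mset (RS c a) (add_mset (FEx c A) (add_mset (FAll c (Impl A B)) G)))) D) \<Longrightarrow>
     dh K (add_mset (FCnd x a A B) G) D"
| hrefl: "dh K (add_mset (RS a a) G) D \<Longrightarrow> dh K G D"
| htrans: "RS c b \<in># G \<Longrightarrow> RS b a \<in># G \<Longrightarrow> dh K (add_mset (RS c a) G) D \<Longrightarrow> dh K G D"
| hsubL: "RW x a \<in># G \<Longrightarrow> RS a b \<in># G \<Longrightarrow> dh K (add_mset (RW x b) G) D \<Longrightarrow> dh K G D"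


fun ren :: "(nat \<Rightarrow> nat) \<Rightarrow> (nat \<Rightarrow> nat) \<Rightarrow> 'p lf \<Rightarrow> 'p lf" where
  "ren f g (RN a x) = RN (g a) (f x)"
| "ren f g (RW x a) = RW (f x) (g a)"
| "ren f g (RS a b) = RS (g a) (g b)"
| "ren f g (Lab x A) = Lab (f x) A"
| "ren f g (FEx a A) = FEx (g a) A"
| "ren f g (FAll a A) = FAll (g a) A"
| "ren f g (FCnd x a A B) = FCnd (f x) (g a) A B"

lemma ren_cong: "(\<forall>x\<in>wlabs \<phi>. f x = f' x) \<Longrightarrow> (\<forall>a\<in>nlabs \<phi>. g a = g' a) \<Longrightarrow> ren f g \<phi> = ren f' g' \<phi>"
  by (cases \<phi>) auto

lemma ren_rel[simp]: "is_rel (ren f g \<phi>) = is_rel \<phi>"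
  by (cases \<phi>) auto

lemma image_ren_cong:
  assumes "\<forall>\<phi>\<in>#G. (\<forall>x\<in>wlabs \<phi>. f x = f' x) \<and> (\<forall>a\<in>nlabs \<phi>. g a = g' a)"
  shows "image_mset (ren f g) G = image_mset (ren f' g') G"
  using assms by (intro image_mset_cong) (auto intro: ren_cong)

lemma finite_wl: "finite (wl_seq G D)"
proof -
  have "\<And>\<phi>. finite (wlabs \<phi>)" by (case_tac \<phi>) auto
  then show ?thesis unfolding wl_seq_def by auto
qed

lemma finite_nl: "finite (nl_seq G D)"
proof -
  have "\<And>\<phi>. finite (nlabs \<phi>)" by (case_tac \<phi>) auto
  then show ?thesis unfolding nl_seq_def by auto
qed

lemma fresh_ex: "finite (X::nat set) \<Longrightarrow> \<exists>y. y \<notin> X"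
  using ex_new_if_finite infinite_UNIV_nat by blast


lemma wl_upd_G: "y \<notin> wl_seq G D \<Longrightarrow> image_mset (ren (f(y:=z)) g) G = image_mset (ren f g) G"
  by (rule image_ren_cong) (auto simp: wl_seq_def)
lemma wl_upd_D: "y \<notin> wl_seq G D \<Longrightarrow> image_mset (ren (f(y:=z)) g) D = image_mset (ren f g) D"
  by (rule image_ren_cong) (auto simp: wl_seq_def)
lemma nl_upd_G: "y \<notin> nl_seq G D \<Longrightarrow> image_mset (ren f (g(y:=z))) G = image_mset (ren f g) G"
  by (rule image_ren_cong) (auto simp: nl_seq_def)
lemma nl_upd_D: "y \<notin> nl_seq G D \<Longrightarrow> image_mset (ren f (g(y:=z))) D = image_mset (ren f g) D"
  by (rule image_ren_cong) (auto simp: nl_seq_def)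

lemma mem_img: "x \<in># M \<Longrightarrow> f x \<in># image_mset f M" by simp

lemma dh_ren: "dh K G D \<Longrightarrow> dh K (image_mset (ren f g) G) (image_mset (ren f g) D)"
proof (induction arbitrary: f g rule: dh.induct)
  case (hinit x p G D)
  have "ren f g (Lab x (At p)) \<in># image_mset (ren f g) G" "ren f g (Lab x (At p)) \<in># image_mset (ren f g) D"
    using hinit by (blast intro: mem_img)+
  then show ?case using hinit by (intro dh.hinit[of "f x" p]) simp_all
next
  case (hbotL x G D)
  have m: "ren f g (Lab x Bot) \<in># image_mset (ren f g) G" using hbotL by (blast intro: mem_img)
  show ?case apply (rule dh.hbotL[where x="f x"]) using m hbotL by simp_all
next
  case (hallL x a G A D)
  have m: "ren f g (RW x a) \<in># image_mset (ren f g) G" "ren f g (FAll a A) \<in># image_mset (ren f g) G"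
    using hallL by (blast intro: mem_img)+
  show ?case apply (rule dh.hallL[where x="f x" and a="g a" and A=A]) using m hallL.hyps hallL.IH[of f g] by simp_all
next
  case (hallR S a G A D)
  show ?case
  proof (simp, rule dh.hallR[where S="{}"], simp)
    fix y
    obtain y0 where y0: "y0 \<notin> S \<union> wl_seq G D" using fresh_ex finite_wl hallR(1) by (meson finite_UnI)
    from hallR.IH[of y0 "f(y0:=y)" g] y0 wl_upd_G[of y0 G D f y g] wl_upd_D[of y0 G D f y g]
    show "dh K (add_mset (RW y (g a)) (image_mset (ren f g) G)) (add_mset (Lab y A) (image_mset (ren f g) D))"
      by (simp del: fun_upd_apply add: fun_upd_same)
  qed
next
  case (hexL S a A G D)
  show ?case
  proof (simp, rule dh.hexL[where S="{}"], simp)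
    fix y
    obtain y0 where y0: "y0 \<notin> S \<union> wl_seq G D" using fresh_ex finite_wl hexL(1) by (meson finite_UnI)
    from hexL.IH[of y0 "f(y0:=y)" g] y0 wl_upd_G[of y0 G D f y g] wl_upd_D[of y0 G D f y g]
    show "dh K (add_mset (RW y (g a)) (add_mset (Lab y A) (image_mset (ren f g) G))) (image_mset (ren f g) D)"
      by (simp del: fun_upd_apply add: fun_upd_same)
  qed
next
  case (hexR x a G A D)
  have m: "ren f g (RW x a) \<in># image_mset (ren f g) G" "ren f g (FEx a A) \<in># image_mset (ren f g) D"
    using hexR by (blast intro: mem_img)+
  show ?case apply (rule dh.hexR[where x="f x" and a="g a" and A=A]) using m hexR.hyps hexR.IH[of f g] by simp_all
next
  case (hcondR S x A G B D)
  show ?case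
  proof (simp, rule dh.hcondR[where S="{}"], simp)
    fix b
    obtain b0 where b0: "b0 \<notin> S \<union> nl_seq G D" using fresh_ex finite_nl hcondR(1) by (meson finite_UnI)
    from hcondR.IH[of b0 f "g(b0:=b)"] b0 nl_upd_G[of b0 G D f g b] nl_upd_D[of b0 G D f g b]
    show "dh K (add_mset (RN b (f x)) (add_mset (FEx b A) (image_mset (ren f g) G)))
          (add_mset (FCnd (f x) b A B) (image_mset (ren f g) D))"
      by (simp del: fun_upd_apply add: fun_upd_same)
  qed
next
  case (hcondL a x G A B D)
  have m: "ren f g (RN a x) \<in># image_mset (ren f g) G" "ren f g (Lab x (Cond A B)) \<in># image_mset (ren f g) G"
    using hcondL by (blast intro: mem_img)+
  show ?case apply (rule dh.hcondL[where a="g a" and x="f x" and A=A and B=B]) using m hcondL.hyps hcondL.IH[of f g] by simp_all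
next
  case (hcondLs a x G A B D)
  have m: "ren f g (RN a x) \<in># image_mset (ren f g) G" "ren f g (Lab x (Cond A B)) \<in># image_mset (ren f g) G"
    using hcondLs by (blast intro: mem_img)+
  show ?case apply (rule dh.hcondLs[where a="g a" and x="f x" and A=A and B=B]) using m hcondLs.hyps hcondLs.IH[of f g] by simp_all
next
  case (hcndR c x G a A B D)
  have m: "ren f g (RN c x) \<in># image_mset (ren f g) G" "ren f g (RS c a) \<in># image_mset (ren f g) G"
    "ren f g (FCnd x a A B) \<in># image_mset (ren f g) D"
    using hcndR by (blast intro: mem_img)+
  show ?case apply (rule dh.hcndR[where c="g c" and x="f x" and a="g a" and A=A and B=B]) using m hcndR.hyps hcndR.IH[of f g] by simp_all
next
  case (hcndL S x a A B G D)
  show ?case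
  proof (simp, rule dh.hcndL[where S="{}"], simp)
    fix c
    obtain c0 where c0: "c0 \<notin> S \<union> nl_seq G D \<union> {a}" using fresh_ex finite_nl hcndL(1) by (meson finite_UnI finite.intros)
    have c0_ne: "\<And>g c. (g(c0:=c)) a = g a" using c0 by simp
    from hcndL.IH[of c0 f "g(c0:=c)"] c0 nl_upd_G[of c0 G D f g c] nl_upd_D[of c0 G D f g c] c0_ne[of g c]
    show "dh K (add_mset (RN c (f x)) (add_mset (RS c (g a)) (add_mset (FEx c A)
            (add_mset (FAll c (Impl A B)) (image_mset (ren f g) G))))) (image_mset (ren f g) D)"
      by (simp del: fun_upd_apply add: fun_upd_same)
  qed
next
  case (htrans c b G a D)
  have m: "ren f g (RS c b) \<in># image_mset (ren f g) G" "ren f g (RS b a) \<in># image_mset (ren f g) G"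
    using htrans by (blast intro: mem_img)+
  show ?case apply (rule dh.htrans[where c="g c" and b="g b" and a="g a"]) using m htrans.hyps htrans.IH[of f g] by simp_all
next
  case (hsubL x a G b D)
  have m: "ren f g (RW x a) \<in># image_mset (ren f g) G" "ren f g (RS a b) \<in># image_mset (ren f g) G"
    using hsubL by (blast intro: mem_img)+
  show ?case apply (rule dh.hsubL[where x="f x" and a="g a" and b="g b"]) using m hsubL.hyps hsubL.IH[of f g] by simp_all
next
  case hconjL
  then show ?case by (auto intro!: dh.hconjL)
next
  case hconjR
  then show ?case by (auto intro!: dh.hconjR)
next
  case hdisjL
  then show ?case by (auto intro!: dh.hdisjL)
next
  case hdisjR
  then show ?case by (auto intro!: dh.hdisjR)
next
  case himplL
  then show ?case by (auto intro!: dh.himplL)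
next
  case himplR
  then show ?case by (auto intro!: dh.himplR)
next
  case (hrefl a G D)
  show ?case apply (rule dh.hrefl[where a="g a"]) using hrefl.IH[of f g] by simp
qed




lemma dh_wk: "dh K G D \<Longrightarrow> \<forall>\<phi>\<in>#D'. \<not> is_rel \<phi> \<Longrightarrow> dh K (G + G') (D + D')"
proof (induction rule: dh.induct)
  case (hinit x p G D) then show ?case by (intro dh.hinit[where x=x and p=p]) auto
next
  case (hbotL x G D) then show ?case by (intro dh.hbotL[where x=x]) auto
next
  case (hallL x a G A D) show ?case apply (rule dh.hallL[where x=x and a=a and A=A]) using hallL by auto
next
  case (hallR S a G A D) show ?case using hallR by (auto intro!: dh.hallR[where S=S])
next
  case (hexL S a A G D) show ?case using hexL by (auto intro!: dh.hexL[where S=S])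
next
  case (hexR x a G A D) show ?case apply (rule dh.hexR[where x=x and a=a and A=A]) using hexR by auto
next
  case (hcondR S x A G B D) show ?case using hcondR by (auto intro!: dh.hcondR[where S=S])
next
  case (hcondL a x G A B D) show ?case apply (rule dh.hcondL[where x=x and a=a and A=A and B=B]) using hcondL by auto
next
  case (hcondLs a x G A B D) show ?case apply (rule dh.hcondLs[where x=x and a=a and A=A and B=B]) using hcondLs by auto
next
  case (hcndR c x G a A B D) show ?case apply (rule dh.hcndR[where c=c and x=x and a=a and A=A and B=B]) using hcndR by auto
next
  case (hcndL S x a A B G D) show ?case using hcndL by (auto intro!: dh.hcndL[where S=S])
next
  case (hrefl a G D) show ?case apply (rule dh.hrefl[where a=a]) using hrefl by auto
next
  case (htrans c b G a D) show ?case apply (rule dh.htrans[where c=c and b=b and a=a]) using htrans by auto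
next
  case (hsubL x a G b D) show ?case apply (rule dh.hsubL[where x=x and a=a and b=b]) using hsubL by auto
next
  case (hconjL x A B G D) show ?case using hconjL.IH hconjL.prems by (simp add: dh.hconjL)
next
  case (hconjR G x A D B) show ?case using hconjR.IH hconjR.prems by (simp add: dh.hconjR)
next
  case (hdisjL x A G D B) show ?case using hdisjL.IH hdisjL.prems by (simp add: dh.hdisjL)
next
  case (hdisjR G x A B D) show ?case using hdisjR.IH hdisjR.prems by (simp add: dh.hdisjR)
next
  case (himplL G x A D B) show ?case using himplL.IH himplL.prems by (simp add: dh.himplL)
next
  case (himplR x A G B D) show ?case using himplR.IH himplR.prems by (simp add: dh.himplR)
qed

lemma dh_wkL: "dh K G D \<Longrightarrow> dh K (G + G') D"
  using dh_wk[of K G D "{#}" G'] by simp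

lemma dh_wkL1: "dh K G D \<Longrightarrow> dh K (add_mset \<phi> G) D"
  using dh_wkL[of K G D "{#\<phi>#}"] by simp

lemma ren_id[simp]: "ren id id \<phi> = \<phi>" by (cases \<phi>) auto
lemma ren_id_fun[simp]: "ren id id = id" by (rule ext) simp

lemma wl_fix_G: "y \<notin> wl_seq G D \<Longrightarrow> image_mset (ren (id(y:=z)) id) G = G"
  using wl_upd_G[of y G D id z id] by simp
lemma wl_fix_D: "y \<notin> wl_seq G D \<Longrightarrow> image_mset (ren (id(y:=z)) id) D = D"
  using wl_upd_D[of y G D id z id] by simp
lemma nl_fix_G: "y \<notin> nl_seq G D \<Longrightarrow> image_mset (ren id (id(y:=z))) G = G"
  using nl_upd_G[of y G D id id z] by simp
lemma nl_fix_D: "y \<notin> nl_seq G D \<Longrightarrow> image_mset (ren id (id(y:=z))) D = D"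
  using nl_upd_D[of y G D id id z] by simp

lemma deriv_dh: "deriv K G D \<Longrightarrow> dh K G D"
proof (induction rule: deriv.induct)
  case (init D x p G) then show ?case by (intro dh.hinit[where x=x and p=p]) auto
next
  case (botL D x G) then show ?case by (intro dh.hbotL[where x=x]) auto
next
  case (allL x A a G D) show ?case apply (rule dh.hallL[where x=x and a=a and A=A]) using allL by (auto simp: add_mset_commute)
next
  case (allR x G a A D)
  show ?case
  proof (rule dh.hallR[where S="{}"], simp)
    fix y
    have fr: "x \<notin> wl_seq G D" using allR(1) by (auto simp: wl_seq_def)
    from dh_ren[OF allR.IH, of "id(x:=y)" id] wl_fix_G[OF fr, of y] wl_fix_D[OF fr, of y]
    show "dh K (add_mset (RW y a) G) (add_mset (Lab y A) D)" by (simp del: fun_upd_apply add: fun_upd_same)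
  qed
next
  case (exL x a A G D)
  show ?case
  proof (rule dh.hexL[where S="{}"], simp)
    fix y
    have fr: "x \<notin> wl_seq G D" using exL(1) by (auto simp: wl_seq_def)
    from dh_ren[OF exL.IH, of "id(x:=y)" id] wl_fix_G[OF fr, of y] wl_fix_D[OF fr, of y]
    show "dh K (add_mset (RW y a) (add_mset (Lab y A) G)) D" by (simp del: fun_upd_apply add: fun_upd_same)
  qed
next
  case (exR x a G A D) show ?case apply (rule dh.hexR[where x=x and a=a and A=A]) using exR by (auto simp: add_mset_commute)
next
  case (condR a G x A B D)
  show ?case
  proof (rule dh.hcondR[where S="{}"], simp)
    fix b
    have fr: "a \<notin> nl_seq G D" using condR(1) by (auto simp: nl_seq_def)
    from dh_ren[OF condR.IH, of id "id(a:=b)"] nl_fix_G[OF fr, of b] nl_fix_D[OF fr, of b]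
    show "dh K (add_mset (RN b x) (add_mset (FEx b A) G)) (add_mset (FCnd x b A B) D)"
      by (simp del: fun_upd_apply add: fun_upd_same)
  qed
next
  case (condL a x A B G D) show ?case apply (rule dh.hcondL[where x=x and a=a and A=A and B=B]) using condL by (auto simp: add_mset_commute)
next
  case (condLstar a x A B G D) show ?case apply (rule dh.hcondLs[where x=x and a=a and A=A and B=B]) using condLstar by (auto simp: add_mset_commute)
next
  case (cndR c x a G A B D) show ?case
    apply (rule dh.hcndR[where c=c and x=x and a=a and A=A and B=B]) using cndR by (auto simp: add_mset_commute)
next
  case (cndL c x a A B G D)
  show ?case
  proof (rule dh.hcndL[where S="{}"], simp)
    fix b
    have fr: "c \<notin> nl_seq G D" using cndL(1) by (auto simp: nl_seq_def)
    have ne: "c \<noteq> a" using cndL(1) by (auto simp: nl_seq_def)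
    from dh_ren[OF cndL.IH, of id "id(c:=b)"] nl_fix_G[OF fr, of b] nl_fix_D[OF fr, of b] ne
    show "dh K (add_mset (RN b x) (add_mset (RS b a) (add_mset (FEx b A) (add_mset (FAll b (Impl A B)) G)))) D"
      by (simp del: fun_upd_apply add: fun_upd_same fun_upd_other)
  qed
next
  case (refl a G D) show ?case apply (rule dh.hrefl[where a=a]) using refl by (auto simp: add_mset_commute)
next
  case (trans c a b G D) show ?case apply (rule dh.htrans[where c=c and b=b and a=a]) using trans by (auto simp: add_mset_commute)
next
  case (subL x a b G D) show ?case apply (rule dh.hsubL[where x=x and a=a and b=b]) using subL by (auto simp: add_mset_commute)
qed (auto intro!: dh.hconjL dh.hconjR dh.hdisjL dh.hdisjR dh.himplL dh.himplR)


lemma two_mem: "p \<in># G \<Longrightarrow> q \<in># G \<Longrightarrow> p \<noteq> q \<Longrightarrow> \<exists>G0. G = add_mset p (add_mset q G0)"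
proof -
  assume a: "p \<in># G" "q \<in># G" "p \<noteq> q"
  from multi_member_split[OF a(1)] obtain G1 where g1: "G = add_mset p G1" by blast
  with a have "q \<in># G1" by simp
  from multi_member_split[OF this] obtain G0 where "G1 = add_mset q G0" by blast
  with g1 show ?thesis by blast
qed

lemma dh_deriv: "dh K G D \<Longrightarrow> deriv K G D"
proof (induction rule: dh.induct)
  case (hinit x p G D)
  from multi_member_split[OF hinit(1)] obtain G0 where g: "G = add_mset (Lab x (At p)) G0" by blast
  from multi_member_split[OF hinit(2)] obtain D0 where d: "D = add_mset (Lab x (At p)) D0" by blast
  show ?case unfolding g d by (rule deriv.init) (use hinit d in auto)
next
  case (hbotL x G D)
  from multi_member_split[OF hbotL(1)] obtain G0 where g: "G = add_mset (Lab x Bot) G0" by blast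
  show ?case unfolding g by (rule deriv.botL) (use hbotL in auto)
next
  case (hallL x a G A D)
  from two_mem[OF hallL(1,2)] obtain G0 where g: "G = add_mset (RW x a) (add_mset (FAll a A) G0)" by auto
  show ?case unfolding g by (rule deriv.allL) (use hallL.IH g in simp)
next
  case (hallR S a G A D)
  obtain y where y: "y \<notin> S \<union> wl_seq G (add_mset (FAll a A) D)" using fresh_ex finite_wl hallR(1) by (meson finite_UnI)
  show ?case by (rule deriv.allR[of y]) (use y hallR.IH in auto)
next
  case (hexL S a A G D)
  obtain y where y: "y \<notin> S \<union> wl_seq (add_mset (FEx a A) G) D" using fresh_ex finite_wl hexL(1) by (meson finite_UnI)
  show ?case by (rule deriv.exL[of y]) (use y hexL.IH in auto)
next
  case (hexR x a G A D)
  from multi_member_split[OF hexR(1)] obtain G0 where g: "G = add_mset (RW x a) G0" by blast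
  from multi_member_split[OF hexR(2)] obtain D0 where d: "D = add_mset (FEx a A) D0" by blast
  show ?case unfolding g d by (rule deriv.exR) (use hexR.IH g d in \<open>simp add: add_mset_commute\<close>)
next
  case (hcondR S x A G B D)
  obtain b where b: "b \<notin> S \<union> nl_seq G (add_mset (Lab x (Cond A B)) D)" using fresh_ex finite_nl hcondR(1) by (meson finite_UnI)
  show ?case by (rule deriv.condR[of b]) (use b hcondR.IH in auto)
next
  case (hcondL a x G A B D)
  from two_mem[OF hcondL(2,3)] obtain G0 where g: "G = add_mset (RN a x) (add_mset (Lab x (Cond A B)) G0)" by auto
  show ?case unfolding g by (rule deriv.condL) (use hcondL g in auto)
next
  case (hcondLs a x G A B D)
  from two_mem[OF hcondLs(2,3)] obtain G0 where g: "G = add_mset (RN a x) (add_mset (Lab x (Cond A B)) G0)" by auto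
  show ?case unfolding g by (rule deriv.condLstar) (use hcondLs g in auto)
next
  case (hcndR c x G a A B D)
  from two_mem[OF hcndR(1,2)] obtain G0 where g: "G = add_mset (RN c x) (add_mset (RS c a) G0)" by auto
  from multi_member_split[OF hcndR(3)] obtain D0 where d: "D = add_mset (FCnd x a A B) D0" by blast
  show ?case unfolding g d by (rule deriv.cndR) (use hcndR.IH g d in \<open>simp_all add: add_mset_commute\<close>)
next
  case (hcndL S x a A B G D)
  obtain c where c: "c \<notin> S \<union> nl_seq (add_mset (FCnd x a A B) G) D" using fresh_ex finite_nl hcndL(1) by (meson finite_UnI)
  show ?case by (rule deriv.cndL[of c]) (use c hcndL.IH in auto)
next
  case (hrefl a G D)
  show ?case using hrefl.IH by (rule deriv.refl[where a=a])
next
  case (htrans c b G a D)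
  show ?case
  proof (cases "c = b \<and> b = a")
    case True
    show ?thesis apply (rule deriv.refl[where a=a]) using htrans.IH True by simp
  next
    case False
    then have "RS c b \<noteq> RS b a" by auto
    from two_mem[OF htrans(1,2) this] obtain G0 where g: "G = add_mset (RS c b) (add_mset (RS b a) G0)" by auto
    show ?thesis unfolding g by (rule deriv.trans) (use htrans.IH g in \<open>simp add: add_mset_commute\<close>)
  qed
next
  case (hsubL x a G b D)
  from two_mem[OF hsubL(1,2)] obtain G0 where g: "G = add_mset (RW x a) (add_mset (RS a b) G0)" by auto
  show ?case unfolding g by (rule deriv.subL) (use hsubL.IH g in \<open>simp add: add_mset_commute\<close>)
next
  case (hconjL x A B G D) show ?case using hconjL.IH by (rule deriv.conjL)
next
  case (hconjR G x A D B) show ?case using hconjR.IH by (rule deriv.conjR)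
next
  case (hdisjL x A G D B) show ?case using hdisjL.IH by (rule deriv.disjL)
next
  case (hdisjR G x A B D) show ?case using hdisjR.IH by (rule deriv.disjR)
next
  case (himplL G x A D B) show ?case using himplL.IH by (rule deriv.implL)
next
  case (himplR x A G B D) show ?case using himplR.IH by (rule deriv.implR)
qed

lemma add_mset_diff_ne[simp]: "p \<noteq> F \<Longrightarrow> add_mset p M - {#F#} = add_mset p (M - {#F#})"
  by simp

lemma mem_diff_ne[simp]: "p \<noteq> F \<Longrightarrow> (p \<in># M - {#F#}) = (p \<in># M)"
  by (simp add: in_diff_count)




lemma add_mset_diff_mem[simp]: "F \<in># M \<Longrightarrow> add_mset a M - {#F#} = add_mset a (M - {#F#})"
  by (cases "a = F") (simp_all add: insert_DiffM)

fun invsL :: "'p lf \<Rightarrow> ('p lf multiset \<times> 'p lf multiset) set" where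
  "invsL (Lab x (Conj A B)) = {({#Lab x A, Lab x B#}, {#})}"
| "invsL (Lab x (Disj A B)) = {({#Lab x A#}, {#}), ({#Lab x B#}, {#})}"
| "invsL (Lab x (Impl A B)) = {({#}, {#Lab x A#}), ({#Lab x B#}, {#})}"
| "invsL (FEx a A) = {({#RW z a, Lab z A#}, {#}) | z. True}"
| "invsL (FCnd x a A B) = {({#RN c x, RS c a, FEx c A, FAll c (Impl A B)#}, {#}) | c. True}"
| "invsL _ = {}"

lemma invsL_DL: "(GL, DL) \<in> invsL F \<Longrightarrow> \<forall>\<phi>\<in>#DL. \<not> is_rel \<phi>"
  by (induct F rule: invsL.induct) auto

lemma invsL_ne: "(GL, DL) \<in> invsL F \<Longrightarrow>
   (\<forall>x a. RW x a \<noteq> F) \<and> (\<forall>x a. RN a x \<noteq> F) \<and> (\<forall>a b. RS a b \<noteq> F) \<and> (\<forall>a A. FAll a A \<noteq> F)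
   \<and> (\<forall>x A B. Lab x (Cond A B) \<noteq> F) \<and> (\<forall>x p. Lab x (At p) \<noteq> F) \<and> (\<forall>x. Lab x Bot \<noteq> F)"
  by (induct F rule: invsL.induct) auto

lemma invL:
  assumes inv: "(GL, DL) \<in> invsL F"
  shows "dh K G D \<Longrightarrow> F \<in># G \<Longrightarrow> dh K (GL + (G - {#F#})) (DL + D)"
proof (induction rule: dh.induct)
  case (hinit x p G D)
  show ?case by (rule dh.hinit[where x=x and p=p]) (use hinit invsL_DL[OF inv] invsL_ne[OF inv] in auto)
next
  case (hbotL x G D)
  show ?case by (rule dh.hbotL[where x=x]) (use hbotL invsL_DL[OF inv] invsL_ne[OF inv] in auto)
next
  case (hconjL x A B G D)
  show ?case
  proof (cases "Lab x (Conj A B) = F")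
    case True
    then show ?thesis using inv hconjL.hyps by auto
  next
    case False
    then have m: "F \<in># G" using hconjL.prems by simp
    have "dh K (add_mset (Lab x (Conj A B)) (GL + (G - {#F#}))) (DL + D)"
      by (rule dh.hconjL) (use hconjL.IH m in simp)
    then show ?thesis using m by simp
  qed
next
  case (hconjR G x A D B)
  have "dh K (GL + (G - {#F#})) (add_mset (Lab x (Conj A B)) (DL + D))"
    by (rule dh.hconjR) (use hconjR.IH hconjR.prems in simp_all)
  then show ?case by simp
next
  case (hdisjL x A G D B)
  show ?case
  proof (cases "Lab x (Disj A B) = F")
    case True
    then show ?thesis using inv hdisjL.hyps by auto
  next
    case False
    then have m: "F \<in># G" using hdisjL.prems by simp
    have "dh K (add_mset (Lab x (Disj A B)) (GL + (G - {#F#}))) (DL + D)"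
      by (rule dh.hdisjL) (use hdisjL.IH m in simp_all)
    then show ?thesis using m by simp
  qed
next
  case (hdisjR G x A B D)
  have "dh K (GL + (G - {#F#})) (add_mset (Lab x (Disj A B)) (DL + D))"
    by (rule dh.hdisjR) (use hdisjR.IH hdisjR.prems in simp_all)
  then show ?case by simp
next
  case (himplL G x A D B)
  show ?case
  proof (cases "Lab x (Impl A B) = F")
    case True
    then show ?thesis using inv himplL.hyps by auto
  next
    case False
    then have m: "F \<in># G" using himplL.prems by simp
    have "dh K (add_mset (Lab x (Impl A B)) (GL + (G - {#F#}))) (DL + D)"
      by (rule dh.himplL) (use himplL.IH m in simp_all)
    then show ?thesis using m by simp
  qed
next
  case (himplR x A G B D)
  have "dh K (GL + (G - {#F#})) (add_mset (Lab x (Impl A B)) (DL + D))"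
    by (rule dh.himplR) (use himplR.IH himplR.prems in simp_all)
  then show ?case by simp
next
  case (hallL x a G A D)
  show ?case
    by (rule dh.hallL[where x=x and a=a and A=A]) (use hallL invsL_ne[OF inv] in simp_all)
next
  case (hallR S a G A D)
  have "dh K (GL + (G - {#F#})) (add_mset (FAll a A) (DL + D))"
    by (rule dh.hallR[OF hallR(1)]) (use hallR.IH hallR.prems in simp)
  then show ?case by simp
next
  case (hexL S a A G D)
  show ?case
  proof (cases "FEx a A = F")
    case True
    then obtain z where gl: "GL = {#RW z a, Lab z A#}" "DL = {#}" using inv by auto
    obtain y0 where y0: "y0 \<notin> S \<union> wl_seq G D" using fresh_ex finite_wl hexL(1) by (meson finite_UnI)
    from dh_ren[OF hexL.hyps(2)[of y0], of "id(y0:=z)" id] y0 wl_fix_G[of y0 G D z] wl_fix_D[of y0 G D z]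
    have "dh K (add_mset (RW z a) (add_mset (Lab z A) G)) D"
      by (simp del: fun_upd_apply add: fun_upd_same)
    then show ?thesis using gl True by simp
  next
    case False
    then have m: "F \<in># G" using hexL.prems by simp
    have "dh K (add_mset (FEx a A) (GL + (G - {#F#}))) (DL + D)"
      by (rule dh.hexL[OF hexL(1)]) (use hexL.IH m in simp)
    then show ?thesis using m by simp
  qed
next
  case (hexR x a G A D)
  show ?case
    by (rule dh.hexR[where x=x and a=a and A=A]) (use hexR invsL_ne[OF inv] in simp_all)
next
  case (hcondR S x A G B D)
  have "dh K (GL + (G - {#F#})) (add_mset (Lab x (Cond A B)) (DL + D))"
    by (rule dh.hcondR[OF hcondR(1)]) (use hcondR.IH hcondR.prems in simp)
  then show ?case by simp
next
  case (hcondL a x G A B D)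
  show ?case
    by (rule dh.hcondL[where x=x and a=a and A=A and B=B]) (use hcondL invsL_ne[OF inv] in simp_all)
next
  case (hcondLs a x G A B D)
  show ?case
    by (rule dh.hcondLs[where x=x and a=a and A=A and B=B]) (use hcondLs invsL_ne[OF inv] in simp_all)
next
  case (hcndR c x G a A B D)
  show ?case
    by (rule dh.hcndR[where c=c and x=x and a=a and A=A and B=B]) (use hcndR invsL_ne[OF inv] in simp_all)
next
  case (hcndL S x a A B G D)
  show ?case
  proof (cases "FCnd x a A B = F")
    case True
    then obtain c where gl: "GL = {#RN c x, RS c a, FEx c A, FAll c (Impl A B)#}" "DL = {#}" using inv by auto
    obtain c0 where c0: "c0 \<notin> S \<union> nl_seq G D \<union> {a}" using fresh_ex finite_nl hcndL(1) by (meson finite_UnI finite.intros)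
    have ne: "(id(c0:=c)) a = a" using c0 by simp
    from dh_ren[OF hcndL.hyps(2)[of c0], of id "id(c0:=c)"] c0 nl_fix_G[of c0 G D c] nl_fix_D[of c0 G D c] ne
    have "dh K (add_mset (RN c x) (add_mset (RS c a) (add_mset (FEx c A) (add_mset (FAll c (Impl A B)) G)))) D"
      by (simp del: fun_upd_apply add: fun_upd_same)
    then show ?thesis using gl True by simp
  next
    case False
    then have m: "F \<in># G" using hcndL.prems by simp
    have "dh K (add_mset (FCnd x a A B) (GL + (G - {#F#}))) (DL + D)"
      by (rule dh.hcndL[OF hcndL(1)]) (use hcndL.IH m in simp)
    then show ?thesis using m by simp
  qed
next
  case (hrefl a G D)
  show ?case
    by (rule dh.hrefl[where a=a]) (use hrefl invsL_ne[OF inv] in simp_all)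
next
  case (htrans c b G a D)
  show ?case
    by (rule dh.htrans[where c=c and b=b and a=a]) (use htrans invsL_ne[OF inv] in simp_all)
next
  case (hsubL x a G b D)
  show ?case
    by (rule dh.hsubL[where x=x and a=a and b=b]) (use hsubL invsL_ne[OF inv] in simp_all)
qed




fun invsR :: "'p lf \<Rightarrow> ('p lf multiset \<times> 'p lf multiset) set" where
  "invsR (Lab x (Conj A B)) = {({#}, {#Lab x A#}), ({#}, {#Lab x B#})}"
| "invsR (Lab x (Disj A B)) = {({#}, {#Lab x A, Lab x B#})}"
| "invsR (Lab x (Impl A B)) = {({#Lab x A#}, {#Lab x B#})}"
| "invsR (Lab x (Cond A B)) = {({#RN b x, FEx b A#}, {#FCnd x b A B#}) | b. True}"
| "invsR _ = {}"

lemma invsR_DL: "(GL, DL) \<in> invsR F \<Longrightarrow> \<forall>\<phi>\<in>#DL. \<not> is_rel \<phi>"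
  by (induct F rule: invsR.induct) auto

lemma invsR_ne: "(GL, DL) \<in> invsR F \<Longrightarrow>
   (\<forall>a A. FAll a A \<noteq> F) \<and> (\<forall>a A. FEx a A \<noteq> F) \<and> (\<forall>x a A B. FCnd x a A B \<noteq> F)
   \<and> (\<forall>x p. Lab x (At p) \<noteq> F) \<and> \<not> is_rel F"
  by (induct F rule: invsR.induct) auto

lemma relfree_diff: "\<forall>\<phi>\<in>#D. \<not> is_rel \<phi> \<Longrightarrow> \<forall>\<phi>\<in>#D - M. \<not> is_rel \<phi>"
  by (meson in_diffD)

lemma invR:
  assumes inv: "(GL, DL) \<in> invsR F"
  shows "dh K G D \<Longrightarrow> F \<in># D \<Longrightarrow> dh K (GL + G) (DL + (D - {#F#}))"
proof (induction rule: dh.induct)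
  case (hinit x p G D)
  have r: "\<forall>\<phi>\<in>#DL + D - {#F#}. \<not> is_rel \<phi>"
    by (rule relfree_diff) (use invsR_DL[OF inv] hinit(3) in auto)
  show ?case by (rule dh.hinit[where x=x and p=p]) (use hinit invsR_ne[OF inv] r in auto)
next
  case (hbotL x G D)
  have r: "\<forall>\<phi>\<in>#DL + D - {#F#}. \<not> is_rel \<phi>"
    by (rule relfree_diff) (use invsR_DL[OF inv] hbotL(2) in auto)
  show ?case by (rule dh.hbotL[where x=x]) (use hbotL r in auto)
next
  case (hconjL x A B G D)
  have "dh K (add_mset (Lab x (Conj A B)) (GL + G)) (DL + (D - {#F#}))"
    by (rule dh.hconjL) (use hconjL.IH hconjL.prems in simp)
  then show ?case by simp
next
  case (hconjR G x A D B)
  show ?case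
  proof (cases "Lab x (Conj A B) = F")
    case True
    then show ?thesis using inv hconjR.hyps by auto
  next
    case False
    then have m: "F \<in># D" using hconjR.prems by simp
    have "dh K (GL + G) (add_mset (Lab x (Conj A B)) (DL + (D - {#F#})))"
      by (rule dh.hconjR) (use hconjR.IH m in simp_all)
    then show ?thesis using m by simp
  qed
next
  case (hdisjL x A G D B)
  have "dh K (add_mset (Lab x (Disj A B)) (GL + G)) (DL + (D - {#F#}))"
    by (rule dh.hdisjL) (use hdisjL.IH hdisjL.prems in simp_all)
  then show ?case by simp
next
  case (hdisjR G x A B D)
  show ?case
  proof (cases "Lab x (Disj A B) = F")
    case True
    then show ?thesis using inv hdisjR.hyps by auto
  next
    case False
    then have m: "F \<in># D" using hdisjR.prems by simp
    have "dh K (GL + G) (add_mset (Lab x (Disj A B)) (DL + (D - {#F#})))"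
      by (rule dh.hdisjR) (use hdisjR.IH m in simp_all)
    then show ?thesis using m by simp
  qed
next
  case (himplL G x A D B)
  have "dh K (add_mset (Lab x (Impl A B)) (GL + G)) (DL + (D - {#F#}))"
    by (rule dh.himplL) (use himplL.IH himplL.prems in simp_all)
  then show ?case by simp
next
  case (himplR x A G B D)
  show ?case
  proof (cases "Lab x (Impl A B) = F")
    case True
    then show ?thesis using inv himplR.hyps by auto
  next
    case False
    then have m: "F \<in># D" using himplR.prems by simp
    have "dh K (GL + G) (add_mset (Lab x (Impl A B)) (DL + (D - {#F#})))"
      by (rule dh.himplR) (use himplR.IH m in simp_all)
    then show ?thesis using m by simp
  qed
next
  case (hallL x a G A D)
  show ?case
    by (rule dh.hallL[where x=x and a=a and A=A]) (use hallL in simp_all)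
next
  case (hallR S a G A D)
  have ne: "FAll a A \<noteq> F" using invsR_ne[OF inv] by auto
  then have m: "F \<in># D" using hallR.prems by simp
  have "dh K (GL + G) (add_mset (FAll a A) (DL + (D - {#F#})))"
    by (rule dh.hallR[OF hallR(1)]) (use hallR.IH m in simp)
  then show ?case using m by simp
next
  case (hexL S a A G D)
  have "dh K (add_mset (FEx a A) (GL + G)) (DL + (D - {#F#}))"
    by (rule dh.hexL[OF hexL(1)]) (use hexL.IH hexL.prems in simp)
  then show ?case by simp
next
  case (hexR x a G A D)
  show ?case
    by (rule dh.hexR[where x=x and a=a and A=A]) (use hexR invsR_ne[OF inv] in simp_all)
next
  case (hcondR S x A G B D)
  show ?case
  proof (cases "Lab x (Cond A B) = F")
    case True
    then obtain b where gl: "GL = {#RN b x, FEx b A#}" "DL = {#FCnd x b A B#}" using inv by auto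
    obtain b0 where b0: "b0 \<notin> S \<union> nl_seq G D" using fresh_ex finite_nl hcondR(1) by (meson finite_UnI)
    from dh_ren[OF hcondR.hyps(2)[of b0], of id "id(b0:=b)"] b0 nl_fix_G[of b0 G D b] nl_fix_D[of b0 G D b]
    have "dh K (add_mset (RN b x) (add_mset (FEx b A) G)) (add_mset (FCnd x b A B) D)"
      by (simp del: fun_upd_apply add: fun_upd_same)
    then show ?thesis using gl True by simp
  next
    case False
    then have m: "F \<in># D" using hcondR.prems by simp
    have "dh K (GL + G) (add_mset (Lab x (Cond A B)) (DL + (D - {#F#})))"
      by (rule dh.hcondR[OF hcondR(1)]) (use hcondR.IH m in simp)
    then show ?thesis using m by simp
  qed
next
  case (hcondL a x G A B D)
  show ?case
    by (rule dh.hcondL[where x=x and a=a and A=A and B=B]) (use hcondL in simp_all)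
next
  case (hcondLs a x G A B D)
  show ?case
    by (rule dh.hcondLs[where x=x and a=a and A=A and B=B]) (use hcondLs in simp_all)
next
  case (hcndR c x G a A B D)
  show ?case
    by (rule dh.hcndR[where c=c and x=x and a=a and A=A and B=B]) (use hcndR invsR_ne[OF inv] in simp_all)
next
  case (hcndL S x a A B G D)
  have "dh K (add_mset (FCnd x a A B) (GL + G)) (DL + (D - {#F#}))"
    by (rule dh.hcndL[OF hcndL(1)]) (use hcndL.IH hcndL.prems in simp)
  then show ?case by simp
next
  case (hrefl a G D)
  show ?case
    by (rule dh.hrefl[where a=a]) (use hrefl in simp_all)
next
  case (htrans c b G a D)
  show ?case
    by (rule dh.htrans[where c=c and b=b and a=a]) (use htrans in simp_all)
next
  case (hsubL x a G b D)
  show ?case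
    by (rule dh.hsubL[where x=x and a=a and b=b]) (use hsubL in simp_all)
qed




fun w :: "'p lf \<Rightarrow> nat" where
  "w (Lab x A) = 3 * size A"
| "w (FEx a A) = 3 * size A + 1"
| "w (FCnd x a A B) = 3 * size A + 2"
| "w _ = 0"

fun rc :: "'p lf \<Rightarrow> bool" where
  "rc (Lab x A) = True"
| "rc (FEx a A) = True"
| "rc (FCnd x a A B) = True"
| "rc _ = False"

lemma mem2: "Q \<in># G \<Longrightarrow> F \<in># G - {#F#} \<Longrightarrow> Q \<in># G - {#F#}"
  by (cases "Q = F") auto

lemma ctrL:
  fixes F :: "'p lf"
  assumes IHL: "\<And>(F'::'p lf) G D. w F' < w F \<Longrightarrow> dh K G D \<Longrightarrow> F' \<in># G - {#F'#} \<Longrightarrow> dh K (G - {#F'#}) D"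
  and IHR: "\<And>(F'::'p lf) G D. w F' < w F \<Longrightarrow> rc F' \<Longrightarrow> dh K G D \<Longrightarrow> F' \<in># D - {#F'#} \<Longrightarrow> dh K G (D - {#F'#})"
  shows "dh K G D \<Longrightarrow> F \<in># G - {#F#} \<Longrightarrow> dh K (G - {#F#}) D"
proof -
  have cl: "dh K (add_mset Q M) D" if "dh K (add_mset Q (add_mset Q M)) D" "w Q < w F" for Q :: "'p lf" and M D
    using IHL[OF that(2) that(1)] by simp
  have cr: "dh K G (add_mset Q M)" if "dh K G (add_mset Q (add_mset Q M))" "w Q < w F" "rc Q" for Q :: "'p lf" and G M
    using IHR[OF that(2) that(3) that(1)] by simp
  show "dh K G D \<Longrightarrow> F \<in># G - {#F#} \<Longrightarrow> dh K (G - {#F#}) D"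
  proof (induction rule: dh.induct)
    case (hinit x p G D)
    show ?case by (rule dh.hinit[where x=x and p=p]) (use hinit mem2[OF hinit(1) hinit.prems] in auto)
  next
    case (hbotL x G D)
    show ?case by (rule dh.hbotL[where x=x]) (use hbotL mem2[OF hbotL(1) hbotL.prems] in auto)
  next
    case (hconjL x A B G D)
    show ?case
    proof (cases "Lab x (Conj A B) = F")
      case True
      then have F: "F = Lab x (Conj A B)" by simp
      have m: "Lab x (Conj A B) \<in># G" using hconjL.prems F by simp
      have inv: "({#Lab x A, Lab x B#}, {#}) \<in> invsL F" using F by simp
      have h1: "dh K ({#Lab x A, Lab x B#} + (add_mset (Lab x A) (add_mset (Lab x B) G) - {#F#})) ({#} + D)"
        by (rule invL[OF inv hconjL.hyps]) (use m F in simp)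
      have h2: "dh K (add_mset (Lab x A) (add_mset (Lab x A) (add_mset (Lab x B) (add_mset (Lab x B) (G - {#Lab x (Conj A B)#}))))) D"
        using h1 m F by (simp add: add_mset_commute)
      have h3: "dh K (add_mset (Lab x A) (add_mset (Lab x B) (add_mset (Lab x B) (G - {#Lab x (Conj A B)#})))) D"
        using h2 by (rule cl) (simp add: F)
      have h4: "dh K (add_mset (Lab x B) (add_mset (Lab x B) (add_mset (Lab x A) (G - {#Lab x (Conj A B)#})))) D"
        using h3 by (simp add: add_mset_commute)
      have h5: "dh K (add_mset (Lab x B) (add_mset (Lab x A) (G - {#Lab x (Conj A B)#}))) D"
        using h4 by (rule cl) (simp add: F)
      have h6: "dh K (add_mset (Lab x (Conj A B)) (G - {#Lab x (Conj A B)#})) D"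
        apply (rule dh.hconjL) using h5 by (simp add: add_mset_commute)
      show ?thesis using h6 m F by simp
    next
      case False
      have m: "F \<in># G - {#F#}" using hconjL.prems False by simp
      have m0: "F \<in># G" using m by (rule in_diffD)
      have "dh K (add_mset (Lab x (Conj A B)) (G - {#F#})) D"
        apply (rule dh.hconjL) using hconjL.IH m m0 by simp
      then show ?thesis using False m0 by simp
    qed
  next
    case (hconjR G x A D B)
    show ?case by (rule dh.hconjR) (use hconjR.IH hconjR.prems in simp_all)
  next
    case (hdisjL x A G D B)
    show ?case
    proof (cases "Lab x (Disj A B) = F")
      case True
      then have F: "F = Lab x (Disj A B)" by simp
      have m: "Lab x (Disj A B) \<in># G" using hdisjL.prems F by simp
      have invA: "({#Lab x A#}, {#}) \<in> invsL F" using F by simp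
      have invB: "({#Lab x B#}, {#}) \<in> invsL F" using F by simp
      have h1: "dh K ({#Lab x A#} + (add_mset (Lab x A) G - {#F#})) ({#} + D)"
        by (rule invL[OF invA hdisjL.hyps(1)]) (use m F in simp)
      have h2: "dh K (add_mset (Lab x A) (add_mset (Lab x A) (G - {#Lab x (Disj A B)#}))) D"
        using h1 m F by simp
      have h3: "dh K (add_mset (Lab x A) (G - {#Lab x (Disj A B)#})) D"
        using h2 by (rule cl) (simp add: F)
      have g1: "dh K ({#Lab x B#} + (add_mset (Lab x B) G - {#F#})) ({#} + D)"
        by (rule invL[OF invB hdisjL.hyps(2)]) (use m F in simp)
      have g2: "dh K (add_mset (Lab x B) (add_mset (Lab x B) (G - {#Lab x (Disj A B)#}))) D"
        using g1 m F by simp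
      have g3: "dh K (add_mset (Lab x B) (G - {#Lab x (Disj A B)#})) D"
        using g2 by (rule cl) (simp add: F)
      have h6: "dh K (add_mset (Lab x (Disj A B)) (G - {#Lab x (Disj A B)#})) D"
        by (rule dh.hdisjL[OF h3 g3])
      show ?thesis using h6 m F by simp
    next
      case False
      have m: "F \<in># G - {#F#}" using hdisjL.prems False by simp
      have m0: "F \<in># G" using m by (rule in_diffD)
      have "dh K (add_mset (Lab x (Disj A B)) (G - {#F#})) D"
        apply (rule dh.hdisjL) using hdisjL.IH m m0 by simp_all
      then show ?thesis using False m0 by simp
    qed
  next
    case (hdisjR G x A B D)
    show ?case by (rule dh.hdisjR) (use hdisjR.IH hdisjR.prems in simp_all)
  next
    case (himplL G x A D B)
    show ?case
    proof (cases "Lab x (Impl A B) = F")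
      case True
      then have F: "F = Lab x (Impl A B)" by simp
      have m: "Lab x (Impl A B) \<in># G" using himplL.prems F by simp
      have invA: "({#}, {#Lab x A#}) \<in> invsL F" using F by simp
      have invB: "({#Lab x B#}, {#}) \<in> invsL F" using F by simp
      have h1: "dh K ({#} + (G - {#F#})) ({#Lab x A#} + add_mset (Lab x A) D)"
        by (rule invL[OF invA himplL.hyps(1)]) (use m F in simp)
      have h2: "dh K (G - {#Lab x (Impl A B)#}) (add_mset (Lab x A) (add_mset (Lab x A) D))"
        using h1 m F by simp
      have h3: "dh K (G - {#Lab x (Impl A B)#}) (add_mset (Lab x A) D)"
        using h2 by (rule cr) (simp_all add: F)
      have g1: "dh K ({#Lab x B#} + (add_mset (Lab x B) G - {#F#})) ({#} + D)"
        by (rule invL[OF invB himplL.hyps(2)]) (use m F in simp)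
      have g2: "dh K (add_mset (Lab x B) (add_mset (Lab x B) (G - {#Lab x (Impl A B)#}))) D"
        using g1 m F by simp
      have g3: "dh K (add_mset (Lab x B) (G - {#Lab x (Impl A B)#})) D"
        using g2 by (rule cl) (simp add: F)
      have h6: "dh K (add_mset (Lab x (Impl A B)) (G - {#Lab x (Impl A B)#})) D"
        by (rule dh.himplL[OF h3 g3])
      show ?thesis using h6 m F by simp
    next
      case False
      have m: "F \<in># G - {#F#}" using himplL.prems False by simp
      have m0: "F \<in># G" using m by (rule in_diffD)
      have "dh K (add_mset (Lab x (Impl A B)) (G - {#F#})) D"
        apply (rule dh.himplL) using himplL.IH m m0 by simp_all
      then show ?thesis using False m0 by simp
    qed
  next
    case (himplR x A G B D)
    show ?case by (rule dh.himplR) (use himplR.IH himplR.prems in_diffD[OF himplR.prems] in simp_all)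
  next
    case (hallL x a G A D)
    show ?case
      by (rule dh.hallL[where x=x and a=a and A=A])
        (use hallL mem2[OF hallL(1) hallL.prems] mem2[OF hallL(2) hallL.prems] in_diffD[OF hallL.prems] in simp_all)
  next
    case (hallR S a G A D)
    show ?case
      by (rule dh.hallR[OF hallR(1)]) (use hallR.IH hallR.prems in_diffD[OF hallR.prems] in simp)
  next
    case (hexL S a A G D)
    show ?case
    proof (cases "FEx a A = F")
      case True
      then have F: "F = FEx a A" by simp
      have m: "FEx a A \<in># G" using hexL.prems F by simp
      have "dh K (add_mset (FEx a A) (G - {#FEx a A#})) D"
      proof (rule dh.hexL[OF hexL(1)])
        fix y assume y: "y \<notin> S"
        have inv: "({#RW y a, Lab y A#}, {#}) \<in> invsL F" using F by auto
        have h1: "dh K ({#RW y a, Lab y A#} + (add_mset (RW y a) (add_mset (Lab y A) G) - {#F#})) ({#} + D)"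
          by (rule invL[OF inv hexL.hyps(2)[OF y]]) (use m F in simp)
        have h2: "dh K (add_mset (RW y a) (add_mset (RW y a) (add_mset (Lab y A) (add_mset (Lab y A) (G - {#FEx a A#}))))) D"
          using h1 m F by (simp add: add_mset_commute)
        have h3: "dh K (add_mset (RW y a) (add_mset (Lab y A) (add_mset (Lab y A) (G - {#FEx a A#})))) D"
          using h2 by (rule cl) (simp add: F)
        have h4: "dh K (add_mset (Lab y A) (add_mset (Lab y A) (add_mset (RW y a) (G - {#FEx a A#})))) D"
          using h3 by (simp add: add_mset_commute)
        have h5: "dh K (add_mset (Lab y A) (add_mset (RW y a) (G - {#FEx a A#}))) D"
          using h4 by (rule cl) (simp add: F)
        show "dh K (add_mset (RW y a) (add_mset (Lab y A) (G - {#FEx a A#}))) D"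
          using h5 by (simp add: add_mset_commute)
      qed
      then show ?thesis using m F by simp
    next
      case False
      have m: "F \<in># G - {#F#}" using hexL.prems False by simp
      have m0: "F \<in># G" using m by (rule in_diffD)
      have "dh K (add_mset (FEx a A) (G - {#F#})) D"
        by (rule dh.hexL[OF hexL(1)]) (use hexL.IH m m0 in simp)
      then show ?thesis using False m0 by simp
    qed
  next
    case (hexR x a G A D)
    show ?case
      by (rule dh.hexR[where x=x and a=a and A=A])
        (use hexR mem2[OF hexR(1) hexR.prems] in_diffD[OF hexR.prems] in simp_all)
  next
    case (hcondR S x A G B D)
    show ?case
      by (rule dh.hcondR[OF hcondR(1)]) (use hcondR.IH hcondR.prems in_diffD[OF hcondR.prems] in simp)
  next
    case (hcondL a x G A B D)
    show ?case
      by (rule dh.hcondL[where x=x and a=a and A=A and B=B])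
        (use hcondL mem2[OF hcondL(2) hcondL.prems] mem2[OF hcondL(3) hcondL.prems] in_diffD[OF hcondL.prems] in simp_all)
  next
    case (hcondLs a x G A B D)
    show ?case
      by (rule dh.hcondLs[where x=x and a=a and A=A and B=B])
        (use hcondLs mem2[OF hcondLs(2) hcondLs.prems] mem2[OF hcondLs(3) hcondLs.prems] in_diffD[OF hcondLs.prems] in simp_all)
  next
    case (hcndR c x G a A B D)
    show ?case
      by (rule dh.hcndR[where c=c and x=x and a=a and A=A and B=B])
        (use hcndR mem2[OF hcndR(1) hcndR.prems] mem2[OF hcndR(2) hcndR.prems] in_diffD[OF hcndR.prems] in simp_all)
  next
    case (hcndL S x a A B G D)
    show ?case
    proof (cases "FCnd x a A B = F")
      case True
      then have F: "F = FCnd x a A B" by simp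
      have m: "FCnd x a A B \<in># G" using hcndL.prems F by simp
      let ?G = "G - {#FCnd x a A B#}"
      have "dh K (add_mset (FCnd x a A B) ?G) D"
      proof (rule dh.hcndL[OF hcndL(1)])
        fix c assume c: "c \<notin> S"
        have inv: "({#RN c x, RS c a, FEx c A, FAll c (Impl A B)#}, {#}) \<in> invsL F" using F by auto
        have h1: "dh K ({#RN c x, RS c a, FEx c A, FAll c (Impl A B)#} +
            (add_mset (RN c x) (add_mset (RS c a) (add_mset (FEx c A) (add_mset (FAll c (Impl A B)) G))) - {#F#})) ({#} + D)"
          by (rule invL[OF inv hcndL.hyps(2)[OF c]]) (use m F in simp)
        have h2: "dh K (add_mset (RN c x) (add_mset (RN c x) (add_mset (RS c a) (add_mset (RS c a)
            (add_mset (FEx c A) (add_mset (FEx c A) (add_mset (FAll c (Impl A B)) (add_mset (FAll c (Impl A B)) ?G)))))))) D"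
          using h1 m F by (simp add: add_mset_commute)
        have h3: "dh K (add_mset (RN c x) (add_mset (RS c a) (add_mset (RS c a)
            (add_mset (FEx c A) (add_mset (FEx c A) (add_mset (FAll c (Impl A B)) (add_mset (FAll c (Impl A B)) ?G))))))) D"
          using h2 by (rule cl) (simp add: F)
        have h4: "dh K (add_mset (RS c a) (add_mset (RS c a)
            (add_mset (FEx c A) (add_mset (FEx c A) (add_mset (FAll c (Impl A B)) (add_mset (FAll c (Impl A B)) (add_mset (RN c x) ?G))))))) D"
          using h3 by (simp add: add_mset_commute)
        have h5: "dh K (add_mset (RS c a)
            (add_mset (FEx c A) (add_mset (FEx c A) (add_mset (FAll c (Impl A B)) (add_mset (FAll c (Impl A B)) (add_mset (RN c x) ?G)))))) D"
          using h4 by (rule cl) (simp add: F)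
        have h6: "dh K (add_mset (FEx c A) (add_mset (FEx c A) (add_mset (FAll c (Impl A B)) (add_mset (FAll c (Impl A B))
            (add_mset (RN c x) (add_mset (RS c a) ?G)))))) D"
          using h5 by (simp add: add_mset_commute)
        have h7: "dh K (add_mset (FEx c A) (add_mset (FAll c (Impl A B)) (add_mset (FAll c (Impl A B))
            (add_mset (RN c x) (add_mset (RS c a) ?G))))) D"
          using h6 by (rule cl) (simp add: F)
        have h8: "dh K (add_mset (FAll c (Impl A B)) (add_mset (FAll c (Impl A B))
            (add_mset (RN c x) (add_mset (RS c a) (add_mset (FEx c A) ?G))))) D"
          using h7 by (simp add: add_mset_commute)
        have h9: "dh K (add_mset (FAll c (Impl A B))
            (add_mset (RN c x) (add_mset (RS c a) (add_mset (FEx c A) ?G)))) D"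
          using h8 by (rule cl) (simp add: F)
        show "dh K (add_mset (RN c x) (add_mset (RS c a) (add_mset (FEx c A) (add_mset (FAll c (Impl A B)) ?G)))) D"
          using h9 by (simp add: add_mset_commute)
      qed
      then show ?thesis using m F by simp
    next
      case False
      have m: "F \<in># G - {#F#}" using hcndL.prems False by simp
      have m0: "F \<in># G" using m by (rule in_diffD)
      have "dh K (add_mset (FCnd x a A B) (G - {#F#})) D"
        by (rule dh.hcndL[OF hcndL(1)]) (use hcndL.IH m m0 in simp)
      then show ?thesis using False m0 by simp
    qed
  next
    case (hrefl a G D)
    show ?case
      by (rule dh.hrefl[where a=a]) (use hrefl in_diffD[OF hrefl.prems] in simp_all)
  next
    case (htrans c b G a D)
    show ?case
      by (rule dh.htrans[where c=c and b=b and a=a])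
        (use htrans mem2[OF htrans(1) htrans.prems] mem2[OF htrans(2) htrans.prems] in_diffD[OF htrans.prems] in simp_all)
  next
    case (hsubL x a G b D)
    show ?case
      by (rule dh.hsubL[where x=x and a=a and b=b])
        (use hsubL mem2[OF hsubL(1) hsubL.prems] mem2[OF hsubL(2) hsubL.prems] in_diffD[OF hsubL.prems] in simp_all)
  qed
qed




lemma ctrR:
  fixes F :: "'p lf"
  assumes IHL: "\<And>(F'::'p lf) G D. w F' < w F \<Longrightarrow> dh K G D \<Longrightarrow> F' \<in># G - {#F'#} \<Longrightarrow> dh K (G - {#F'#}) D"
  and IHR: "\<And>(F'::'p lf) G D. w F' < w F \<Longrightarrow> rc F' \<Longrightarrow> dh K G D \<Longrightarrow> F' \<in># D - {#F'#} \<Longrightarrow> dh K G (D - {#F'#})"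
  and rcF: "rc F"
  shows "dh K G D \<Longrightarrow> F \<in># D - {#F#} \<Longrightarrow> dh K G (D - {#F#})"
proof -
  have cl: "dh K (add_mset Q M) D" if "dh K (add_mset Q (add_mset Q M)) D" "w Q < w F" for Q :: "'p lf" and M D
    using IHL[OF that(2) that(1)] by simp
  have cr: "dh K G (add_mset Q M)" if "dh K G (add_mset Q (add_mset Q M))" "w Q < w F" "rc Q" for Q :: "'p lf" and G M
    using IHR[OF that(2) that(3) that(1)] by simp
  show "dh K G D \<Longrightarrow> F \<in># D - {#F#} \<Longrightarrow> dh K G (D - {#F#})"
  proof (induction rule: dh.induct)
    case (hinit x p G D)
    show ?case by (rule dh.hinit[where x=x and p=p]) (use hinit mem2[OF hinit(2) hinit.prems] relfree_diff[OF hinit(3)] in auto)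
  next
    case (hbotL x G D)
    show ?case by (rule dh.hbotL[where x=x]) (use hbotL relfree_diff[OF hbotL(2)] in auto)
  next
    case (hconjL x A B G D)
    show ?case by (rule dh.hconjL) (use hconjL.IH hconjL.prems in simp)
  next
    case (hconjR G x A D B)
    show ?case
    proof (cases "Lab x (Conj A B) = F")
      case True
      then have F: "F = Lab x (Conj A B)" by simp
      have m: "Lab x (Conj A B) \<in># D" using hconjR.prems F by simp
      have invA: "({#}, {#Lab x A#}) \<in> invsR F" using F by simp
      have invB: "({#}, {#Lab x B#}) \<in> invsR F" using F by simp
      have h1: "dh K ({#} + G) ({#Lab x A#} + (add_mset (Lab x A) D - {#F#}))"
        by (rule invR[OF invA hconjR.hyps(1)]) (use m F in simp)
      have h2: "dh K G (add_mset (Lab x A) (add_mset (Lab x A) (D - {#Lab x (Conj A B)#})))"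
        using h1 m F by simp
      have h3: "dh K G (add_mset (Lab x A) (D - {#Lab x (Conj A B)#}))"
        using h2 by (rule cr) (simp_all add: F)
      have g1: "dh K ({#} + G) ({#Lab x B#} + (add_mset (Lab x B) D - {#F#}))"
        by (rule invR[OF invB hconjR.hyps(2)]) (use m F in simp)
      have g2: "dh K G (add_mset (Lab x B) (add_mset (Lab x B) (D - {#Lab x (Conj A B)#})))"
        using g1 m F by simp
      have g3: "dh K G (add_mset (Lab x B) (D - {#Lab x (Conj A B)#}))"
        using g2 by (rule cr) (simp_all add: F)
      have h6: "dh K G (add_mset (Lab x (Conj A B)) (D - {#Lab x (Conj A B)#}))"
        by (rule dh.hconjR[OF h3 g3])
      show ?thesis using h6 m F by simp
    next
      case False
      have m: "F \<in># D - {#F#}" using hconjR.prems False by simp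
      have m0: "F \<in># D" using m by (rule in_diffD)
      have "dh K G (add_mset (Lab x (Conj A B)) (D - {#F#}))"
        apply (rule dh.hconjR) using hconjR.IH m m0 by simp_all
      then show ?thesis using False m0 by simp
    qed
  next
    case (hdisjL x A G D B)
    show ?case by (rule dh.hdisjL) (use hdisjL.IH hdisjL.prems in simp_all)
  next
    case (hdisjR G x A B D)
    show ?case
    proof (cases "Lab x (Disj A B) = F")
      case True
      then have F: "F = Lab x (Disj A B)" by simp
      have m: "Lab x (Disj A B) \<in># D" using hdisjR.prems F by simp
      have inv: "({#}, {#Lab x A, Lab x B#}) \<in> invsR F" using F by simp
      have h1: "dh K ({#} + G) ({#Lab x A, Lab x B#} + (add_mset (Lab x A) (add_mset (Lab x B) D) - {#F#}))"
        by (rule invR[OF inv hdisjR.hyps]) (use m F in simp)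
      have h2: "dh K G (add_mset (Lab x A) (add_mset (Lab x A) (add_mset (Lab x B) (add_mset (Lab x B) (D - {#Lab x (Disj A B)#})))))"
        using h1 m F by (simp add: add_mset_commute)
      have h3: "dh K G (add_mset (Lab x A) (add_mset (Lab x B) (add_mset (Lab x B) (D - {#Lab x (Disj A B)#}))))"
        using h2 by (rule cr) (simp_all add: F)
      have h4: "dh K G (add_mset (Lab x B) (add_mset (Lab x B) (add_mset (Lab x A) (D - {#Lab x (Disj A B)#}))))"
        using h3 by (simp add: add_mset_commute)
      have h5: "dh K G (add_mset (Lab x B) (add_mset (Lab x A) (D - {#Lab x (Disj A B)#})))"
        using h4 by (rule cr) (simp_all add: F)
      have h6: "dh K G (add_mset (Lab x (Disj A B)) (D - {#Lab x (Disj A B)#}))"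
        apply (rule dh.hdisjR) using h5 by (simp add: add_mset_commute)
      show ?thesis using h6 m F by simp
    next
      case False
      have m: "F \<in># D - {#F#}" using hdisjR.prems False by simp
      have m0: "F \<in># D" using m by (rule in_diffD)
      have "dh K G (add_mset (Lab x (Disj A B)) (D - {#F#}))"
        apply (rule dh.hdisjR) using hdisjR.IH m m0 by simp
      then show ?thesis using False m0 by simp
    qed
  next
    case (himplL G x A D B)
    show ?case by (rule dh.himplL) (use himplL.IH himplL.prems in_diffD[OF himplL.prems] in simp_all)
  next
    case (himplR x A G B D)
    show ?case
    proof (cases "Lab x (Impl A B) = F")
      case True
      then have F: "F = Lab x (Impl A B)" by simp
      have m: "Lab x (Impl A B) \<in># D" using himplR.prems F by simp
      have inv: "({#Lab x A#}, {#Lab x B#}) \<in> invsR F" using F by simp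
      have h1: "dh K ({#Lab x A#} + add_mset (Lab x A) G) ({#Lab x B#} + (add_mset (Lab x B) D - {#F#}))"
        by (rule invR[OF inv himplR.hyps]) (use m F in simp)
      have h2: "dh K (add_mset (Lab x A) (add_mset (Lab x A) G)) (add_mset (Lab x B) (add_mset (Lab x B) (D - {#Lab x (Impl A B)#})))"
        using h1 m F by simp
      have h3: "dh K (add_mset (Lab x A) G) (add_mset (Lab x B) (add_mset (Lab x B) (D - {#Lab x (Impl A B)#})))"
        using h2 by (rule cl) (simp add: F)
      have h4: "dh K (add_mset (Lab x A) G) (add_mset (Lab x B) (D - {#Lab x (Impl A B)#}))"
        using h3 by (rule cr) (simp_all add: F)
      have h6: "dh K G (add_mset (Lab x (Impl A B)) (D - {#Lab x (Impl A B)#}))"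
        by (rule dh.himplR[OF h4])
      show ?thesis using h6 m F by simp
    next
      case False
      have m: "F \<in># D - {#F#}" using himplR.prems False by simp
      have m0: "F \<in># D" using m by (rule in_diffD)
      have "dh K G (add_mset (Lab x (Impl A B)) (D - {#F#}))"
        apply (rule dh.himplR) using himplR.IH m m0 by simp
      then show ?thesis using False m0 by simp
    qed
  next
    case (hallL x a G A D)
    show ?case
      by (rule dh.hallL[where x=x and a=a and A=A]) (use hallL in simp_all)
  next
    case (hallR S a G A D)
    have ne: "FAll a A \<noteq> F" using rcF by auto
    have m: "F \<in># D - {#F#}" using hallR.prems ne by simp
    have m0: "F \<in># D" using m by (rule in_diffD)
    have "dh K G (add_mset (FAll a A) (D - {#F#}))"
      by (rule dh.hallR[OF hallR(1)]) (use hallR.IH m m0 in simp)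
    then show ?case using ne m0 by simp
  next
    case (hexL S a A G D)
    show ?case by (rule dh.hexL[OF hexL(1)]) (use hexL.IH hexL.prems in simp)
  next
    case (hexR x a G A D)
    show ?case
      by (rule dh.hexR[where x=x and a=a and A=A])
        (use hexR mem2[OF hexR(2) hexR.prems] in_diffD[OF hexR.prems] in simp_all)
  next
    case (hcondR S x A G B D)
    show ?case
    proof (cases "Lab x (Cond A B) = F")
      case True
      then have F: "F = Lab x (Cond A B)" by simp
      have m: "Lab x (Cond A B) \<in># D" using hcondR.prems F by simp
      let ?D = "D - {#Lab x (Cond A B)#}"
      have "dh K G (add_mset (Lab x (Cond A B)) ?D)"
      proof (rule dh.hcondR[OF hcondR(1)])
        fix b assume b: "b \<notin> S"
        have inv: "({#RN b x, FEx b A#}, {#FCnd x b A B#}) \<in> invsR F" using F by auto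
        have h1: "dh K ({#RN b x, FEx b A#} + add_mset (RN b x) (add_mset (FEx b A) G))
                      ({#FCnd x b A B#} + (add_mset (FCnd x b A B) D - {#F#}))"
          by (rule invR[OF inv hcondR.hyps(2)[OF b]]) (use m F in simp)
        have h2: "dh K (add_mset (RN b x) (add_mset (RN b x) (add_mset (FEx b A) (add_mset (FEx b A) G))))
                      (add_mset (FCnd x b A B) (add_mset (FCnd x b A B) ?D))"
          using h1 m F by (simp add: add_mset_commute)
        have h3: "dh K (add_mset (RN b x) (add_mset (FEx b A) (add_mset (FEx b A) G)))
                      (add_mset (FCnd x b A B) (add_mset (FCnd x b A B) ?D))"
          using h2 by (rule cl) (simp add: F)
        have h4: "dh K (add_mset (FEx b A) (add_mset (FEx b A) (add_mset (RN b x) G)))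
                      (add_mset (FCnd x b A B) (add_mset (FCnd x b A B) ?D))"
          using h3 by (simp add: add_mset_commute)
        have h5: "dh K (add_mset (FEx b A) (add_mset (RN b x) G))
                      (add_mset (FCnd x b A B) (add_mset (FCnd x b A B) ?D))"
          using h4 by (rule cl) (simp add: F)
        have h6: "dh K (add_mset (FEx b A) (add_mset (RN b x) G)) (add_mset (FCnd x b A B) ?D)"
          using h5 by (rule cr) (simp_all add: F)
        show "dh K (add_mset (RN b x) (add_mset (FEx b A) G)) (add_mset (FCnd x b A B) ?D)"
          using h6 by (simp add: add_mset_commute)
      qed
      then show ?thesis using m F by simp
    next
      case False
      have m: "F \<in># D - {#F#}" using hcondR.prems False by simp
      have m0: "F \<in># D" using m by (rule in_diffD)
      have "dh K G (add_mset (Lab x (Cond A B)) (D - {#F#}))"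
        by (rule dh.hcondR[OF hcondR(1)]) (use hcondR.IH m m0 in simp)
      then show ?thesis using False m0 by simp
    qed
  next
    case (hcondL a x G A B D)
    show ?case
      by (rule dh.hcondL[where x=x and a=a and A=A and B=B]) (use hcondL in_diffD[OF hcondL.prems] in simp_all)
  next
    case (hcondLs a x G A B D)
    show ?case
      by (rule dh.hcondLs[where x=x and a=a and A=A and B=B]) (use hcondLs in_diffD[OF hcondLs.prems] in simp_all)
  next
    case (hcndR c x G a A B D)
    show ?case
      by (rule dh.hcndR[where c=c and x=x and a=a and A=A and B=B])
        (use hcndR mem2[OF hcndR(3) hcndR.prems] in_diffD[OF hcndR.prems] in simp_all)
  next
    case (hcndL S x a A B G D)
    show ?case by (rule dh.hcndL[OF hcndL(1)]) (use hcndL.IH hcndL.prems in simp)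
  next
    case (hrefl a G D)
    show ?case by (rule dh.hrefl[where a=a]) (use hrefl in simp_all)
  next
    case (htrans c b G a D)
    show ?case by (rule dh.htrans[where c=c and b=b and a=a]) (use htrans in simp_all)
  next
    case (hsubL x a G b D)
    show ?case by (rule dh.hsubL[where x=x and a=a and b=b]) (use hsubL in simp_all)
  qed
qed

lemma ctr_all:
  "\<forall>F::'p lf. w F = n \<longrightarrow>
     (\<forall>G D. dh K G D \<longrightarrow> F \<in># G - {#F#} \<longrightarrow> dh K (G - {#F#}) D) \<and>
     (rc F \<longrightarrow> (\<forall>G D. dh K G D \<longrightarrow> F \<in># D - {#F#} \<longrightarrow> dh K G (D - {#F#})))"
proof (induction n rule: less_induct)
  case (less n)
  show ?case
  proof (intro allI impI)
    fix F :: "'p lf" assume wn: "w F = n"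
    have IHL: "\<And>(F'::'p lf) G D. w F' < w F \<Longrightarrow> dh K G D \<Longrightarrow> F' \<in># G - {#F'#} \<Longrightarrow> dh K (G - {#F'#}) D"
      using less wn by blast
    have IHR: "\<And>(F'::'p lf) G D. w F' < w F \<Longrightarrow> rc F' \<Longrightarrow> dh K G D \<Longrightarrow> F' \<in># D - {#F'#} \<Longrightarrow> dh K G (D - {#F'#})"
      using less wn by blast
    show "(\<forall>G D. dh K G D \<longrightarrow> F \<in># G - {#F#} \<longrightarrow> dh K (G - {#F#}) D) \<and>
     (rc F \<longrightarrow> (\<forall>G D. dh K G D \<longrightarrow> F \<in># D - {#F#} \<longrightarrow> dh K G (D - {#F#})))"
      using ctrL[OF IHL IHR] ctrR[OF IHL IHR] by blast
  qed
qed

lemma ctrL1: "dh K (add_mset Q (add_mset Q M)) D \<Longrightarrow> dh K (add_mset Q M) D"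
proof -
  assume a: "dh K (add_mset Q (add_mset Q M)) D"
  have "\<forall>G D. dh K G D \<longrightarrow> Q \<in># G - {#Q#} \<longrightarrow> dh K (G - {#Q#}) D"
    using ctr_all[of "w Q" K] by blast
  from this[rule_format, of "add_mset Q (add_mset Q M)" D] a
  have "dh K (add_mset Q (add_mset Q M) - {#Q#}) D" by simp
  then show ?thesis by simp
qed

lemma monall:
  fixes F :: "'p lf"
  assumes FF: "F = FAll b A"
  shows "dh K G D \<Longrightarrow> F \<in># G \<Longrightarrow> RS b a \<in># G \<Longrightarrow> FAll a A \<in># G - {#F#} \<Longrightarrow> dh K (G - {#F#}) D"
proof (induction rule: dh.induct)
  case (hinit x p G D)
  show ?case by (rule dh.hinit[where x=x and p=p]) (use hinit FF in auto)
next
  case (hbotL x G D)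
  show ?case by (rule dh.hbotL[where x=x]) (use hbotL FF in auto)
next
  case (hconjL x A B G D)
  have "dh K (add_mset (Lab x (Conj A B)) (G - {#F#})) D"
    by (rule dh.hconjL) (use hconjL.IH hconjL.prems FF in simp)
  then show ?case using FF by simp
next
  case (hconjR G x A D B)
  show ?case by (rule dh.hconjR) (use hconjR.IH hconjR.prems in simp_all)
next
  case (hdisjL x A G D B)
  have "dh K (add_mset (Lab x (Disj A B)) (G - {#F#})) D"
    by (rule dh.hdisjL) (use hdisjL.IH hdisjL.prems FF in simp_all)
  then show ?case using FF by simp
next
  case (hdisjR G x A B D)
  show ?case by (rule dh.hdisjR) (use hdisjR.IH hdisjR.prems in simp_all)
next
  case (himplL G x A D B)
  have "dh K (add_mset (Lab x (Impl A B)) (G - {#F#})) D"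
    by (rule dh.himplL) (use himplL.IH himplL.prems FF in simp_all)
  then show ?case using FF by simp
next
  case (himplR x A G B D)
  show ?case by (rule dh.himplR) (use himplR.IH himplR.prems FF in simp_all)
next
  case (hallL x a' G A' D)
  have ih: "dh K (add_mset (Lab x A') (G - {#F#})) D"
    using hallL.IH hallL.prems by simp
  show ?case
  proof (cases "FAll a' A' = F")
    case False
    show ?thesis
      by (rule dh.hallL[where x=x and a=a' and A=A']) (use hallL.hyps hallL.prems False ih FF in simp_all)
  next
    case True
    then have e: "a' = b" "A' = A" using FF by auto
    have m1: "RW x b \<in># G - {#F#}" using hallL.hyps e FF by simp
    have m2: "RS b a \<in># G - {#F#}" using hallL.prems FF by simp
    have "dh K (add_mset (Lab x A) (add_mset (RW x a) (G - {#F#}))) D"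
      using dh_wkL1[OF ih, of "RW x a"] e by (simp add: add_mset_commute)
    then have "dh K (add_mset (RW x a) (G - {#F#})) D"
      by (rule dh.hallL[where x=x and a=a and A=A, rotated 2]) (use hallL.prems in simp_all)
    then show ?thesis
      by (rule dh.hsubL[OF m1 m2])
  qed
next
  case (hallR S a' G A' D)
  show ?case by (rule dh.hallR[OF hallR(1)]) (use hallR.IH hallR.prems FF in simp)
next
  case (hexL S a' A' G D)
  have "dh K (add_mset (FEx a' A') (G - {#F#})) D"
    by (rule dh.hexL[OF hexL(1)]) (use hexL.IH hexL.prems FF in simp)
  then show ?case using FF by simp
next
  case (hexR x a' G A' D)
  show ?case by (rule dh.hexR[where x=x and a=a' and A=A']) (use hexR FF in simp_all)
next
  case (hcondR S x A' G B D)
  show ?case by (rule dh.hcondR[OF hcondR(1)]) (use hcondR.IH hcondR.prems FF in simp)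
next
  case (hcondL a' x G A' B D)
  show ?case by (rule dh.hcondL[where x=x and a=a' and A=A' and B=B]) (use hcondL FF in simp_all)
next
  case (hcondLs a' x G A' B D)
  show ?case by (rule dh.hcondLs[where x=x and a=a' and A=A' and B=B]) (use hcondLs FF in simp_all)
next
  case (hcndR c x G a' A' B D)
  show ?case by (rule dh.hcndR[where c=c and x=x and a=a' and A=A' and B=B]) (use hcndR FF in simp_all)
next
  case (hcndL S x a' A' B G D)
  have "dh K (add_mset (FCnd x a' A' B) (G - {#F#})) D"
    by (rule dh.hcndL[OF hcndL(1)]) (use hcndL.IH hcndL.prems FF in simp)
  then show ?case using FF by simp
next
  case (hrefl a' G D)
  show ?case by (rule dh.hrefl[where a=a']) (use hrefl FF in simp_all)
next
  case (htrans c b' G a' D)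
  show ?case by (rule dh.htrans[where c=c and b=b' and a=a']) (use htrans FF in simp_all)
next
  case (hsubL x a' G b' D)
  show ?case by (rule dh.hsubL[where x=x and a=a' and b=b']) (use hsubL FF in simp_all)
qed

lemma p3: "dh K (add_mset (FEx a A) (add_mset (FCnd x a A B) G)) D \<Longrightarrow> dh K (add_mset (FCnd x a A B) G) D"
proof -
  assume H: "dh K (add_mset (FEx a A) (add_mset (FCnd x a A B) G)) D"
  show ?thesis
  proof (rule dh.hcndL[where S="{}"], simp)
    fix c
    have "dh K (add_mset (FEx c A) (add_mset (RN c x) (add_mset (RS c a) (add_mset (FAll c (Impl A B)) G)))) D"
    proof (rule dh.hexL[where S="{}"], simp)
      fix z
      have inv1: "({#RN c x, RS c a, FEx c A, FAll c (Impl A B)#}, {#}) \<in> invsL (FCnd x a A B)" by auto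
      have h1: "dh K ({#RN c x, RS c a, FEx c A, FAll c (Impl A B)#} +
          (add_mset (FEx a A) (add_mset (FCnd x a A B) G) - {#FCnd x a A B#})) ({#} + D)"
        by (rule invL[OF inv1 H]) simp
      have h1': "dh K (add_mset (FEx a A) (add_mset (RN c x) (add_mset (RS c a) (add_mset (FEx c A) (add_mset (FAll c (Impl A B)) G))))) D"
        using h1 by (simp add: add_mset_commute)
      have inv2: "({#RW z a, Lab z A#}, {#}) \<in> invsL (FEx a A)" by auto
      have h2: "dh K ({#RW z a, Lab z A#} + (add_mset (FEx a A) (add_mset (RN c x) (add_mset (RS c a) (add_mset (FEx c A) (add_mset (FAll c (Impl A B)) G)))) - {#FEx a A#})) ({#} + D)"
        by (rule invL[OF inv2 h1']) simp
      have h2': "dh K (add_mset (FEx c A) (add_mset (RW z a) (add_mset (Lab z A) (add_mset (RN c x) (add_mset (RS c a) (add_mset (FAll c (Impl A B)) G)))))) D"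
        using h2 by (simp add: add_mset_commute)
      have inv3: "({#RW z c, Lab z A#}, {#}) \<in> invsL (FEx c A)" by auto
      have h3: "dh K ({#RW z c, Lab z A#} + (add_mset (FEx c A) (add_mset (RW z a) (add_mset (Lab z A) (add_mset (RN c x) (add_mset (RS c a) (add_mset (FAll c (Impl A B)) G))))) - {#FEx c A#})) ({#} + D)"
        by (rule invL[OF inv3 h2']) simp
      have h3': "dh K (add_mset (Lab z A) (add_mset (Lab z A) (add_mset (RW z c) (add_mset (RW z a) (add_mset (RN c x) (add_mset (RS c a) (add_mset (FAll c (Impl A B)) G))))))) D"
        using h3 by (simp add: add_mset_commute)
      have h4: "dh K (add_mset (Lab z A) (add_mset (RW z c) (add_mset (RW z a) (add_mset (RN c x) (add_mset (RS c a) (add_mset (FAll c (Impl A B)) G)))))) D"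
        by (rule ctrL1[OF h3'])
      have h5: "dh K (add_mset (RW z c) (add_mset (Lab z A) (add_mset (RN c x) (add_mset (RS c a) (add_mset (FAll c (Impl A B)) G))))) D"
        by (rule dh.hsubL[where x=z and a=c and b=a]) (use h4 in \<open>simp_all add: add_mset_commute\<close>)
      show "dh K (add_mset (RW z c) (add_mset (Lab z A) (add_mset (RN c x) (add_mset (RS c a) (add_mset (FAll c (Impl A B)) G))))) D"
        by (rule h5)
    qed
    then show "dh K (add_mset (RN c x) (add_mset (RS c a) (add_mset (FEx c A) (add_mset (FAll c (Impl A B)) G)))) D"
      by (simp add: add_mset_commute)
  qed
qed


lemma part1: "\<forall>(a::nlab) (b::nlab) (A::'p fm) G D.
      deriv CL (add_mset (RS b a) (add_mset (FAll b A) (add_mset (FAll a A) G))) D \<longrightarrow>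
      deriv CL (add_mset (RS b a) (add_mset (FAll a A) G)) D"
proof (intro allI impI)
  fix a b :: nlab and A :: "'p fm" and G D
  assume h: "deriv CL (add_mset (RS b a) (add_mset (FAll b A) (add_mset (FAll a A) G))) D"
  have d: "dh CL (add_mset (RS b a) (add_mset (FAll b A) (add_mset (FAll a A) G))) D" by (rule deriv_dh[OF h])
  have "dh CL (add_mset (RS b a) (add_mset (FAll b A) (add_mset (FAll a A) G)) - {#FAll b A#}) D"
    by (rule monall[where a=a, OF HOL.refl d]) simp_all
  then have "dh CL (add_mset (RS b a) (add_mset (FAll a A) G)) D" by simp
  then show "deriv CL (add_mset (RS b a) (add_mset (FAll a A) G)) D" by (rule dh_deriv)
qed

lemma part2: "\<forall>(a::nlab) (x::wlab) (A::'p fm) B G D.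
      deriv CLstar (add_mset (RN a x) (add_mset (Lab x (Cond A B)) G)) (add_mset (FEx a A) D) \<and>
      deriv CLstar (add_mset (FCnd x a A B) (add_mset (RN a x) (add_mset (Lab x (Cond A B)) G))) D
      \<longrightarrow> deriv CLstar (add_mset (RN a x) (add_mset (Lab x (Cond A B)) G)) D"
proof (intro allI impI)
  fix a :: nlab and x :: wlab and A B :: "'p fm" and G D
  assume h: "deriv CLstar (add_mset (RN a x) (add_mset (Lab x (Cond A B)) G)) (add_mset (FEx a A) D) \<and>
      deriv CLstar (add_mset (FCnd x a A B) (add_mset (RN a x) (add_mset (Lab x (Cond A B)) G))) D"
  have d1: "dh CLstar (add_mset (RN a x) (add_mset (Lab x (Cond A B)) G)) (add_mset (FEx a A) D)"
    using h deriv_dh by blast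
  have d2: "dh CLstar (add_mset (FCnd x a A B) (add_mset (RN a x) (add_mset (Lab x (Cond A B)) G))) D"
    using h deriv_dh by blast
  have "dh CLstar (add_mset (RN a x) (add_mset (Lab x (Cond A B)) G)) D"
    by (rule dh.hcondLs[where a=a and x=x and A=A and B=B, OF HOL.refl _ _ d1 dh_wkL1[OF d2]]) simp_all
  then show "deriv CLstar (add_mset (RN a x) (add_mset (Lab x (Cond A B)) G)) D" by (rule dh_deriv)
qed

lemma part3: "\<forall>(a::nlab) (x::wlab) (A::'p fm) B G D.
      deriv CL (add_mset (RN a x) (add_mset (Lab x (Cond A B)) G)) (add_mset (FEx a A) D) \<and>
      deriv CL (add_mset (FEx a A) (add_mset (FCnd x a A B)
                  (add_mset (RN a x) (add_mset (Lab x (Cond A B)) G)))) D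
      \<longrightarrow> deriv CL (add_mset (RN a x) (add_mset (Lab x (Cond A B)) G)) D"
proof (intro allI impI)
  fix a :: nlab and x :: wlab and A B :: "'p fm" and G D
  assume h: "deriv CL (add_mset (RN a x) (add_mset (Lab x (Cond A B)) G)) (add_mset (FEx a A) D) \<and>
      deriv CL (add_mset (FEx a A) (add_mset (FCnd x a A B)
                  (add_mset (RN a x) (add_mset (Lab x (Cond A B)) G)))) D"
  have d1: "dh CL (add_mset (RN a x) (add_mset (Lab x (Cond A B)) G)) (add_mset (FEx a A) D)"
    using h deriv_dh by blast
  have d2: "dh CL (add_mset (FEx a A) (add_mset (FCnd x a A B)
                  (add_mset (RN a x) (add_mset (Lab x (Cond A B)) G)))) D"
    using h deriv_dh by blast
  have "dh CL (add_mset (RN a x) (add_mset (Lab x (Cond A B)) G)) D"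
    by (rule dh.hcondL[where a=a and x=x and A=A and B=B, OF HOL.refl _ _ d1 p3[OF d2]]) simp_all
  then show "deriv CL (add_mset (RN a x) (add_mset (Lab x (Cond A B)) G)) D" by (rule dh_deriv)
qed

theorem mainTheorem15:
  shows
  "(\<forall>(a::nlab) (b::nlab) (A::'p fm) G D.
      deriv CL (add_mset (RS b a) (add_mset (FAll b A) (add_mset (FAll a A) G))) D \<longrightarrow>
      deriv CL (add_mset (RS b a) (add_mset (FAll a A) G)) D)
 \<and> (\<forall>(a::nlab) (x::wlab) (A::'p fm) B G D.
      deriv CLstar (add_mset (RN a x) (add_mset (Lab x (Cond A B)) G)) (add_mset (FEx a A) D) \<and>
      deriv CLstar (add_mset (FCnd x a A B) (add_mset (RN a x) (add_mset (Lab x (Cond A B)) G))) D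
      \<longrightarrow> deriv CLstar (add_mset (RN a x) (add_mset (Lab x (Cond A B)) G)) D)
 \<and> (\<forall>(a::nlab) (x::wlab) (A::'p fm) B G D.
      deriv CL (add_mset (RN a x) (add_mset (Lab x (Cond A B)) G)) (add_mset (FEx a A) D) \<and>
      deriv CL (add_mset (FEx a A) (add_mset (FCnd x a A B)
                  (add_mset (RN a x) (add_mset (Lab x (Cond A B)) G)))) D
      \<longrightarrow> deriv CL (add_mset (RN a x) (add_mset (Lab x (Cond A B)) G)) D)"
  using part1 part2 part3 by blast

end
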